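(* Let $h_1,h_2:(0,\infty)\to\mathbb{R}$ be non-degenerate hockey-stick curves that are not ordered, i.e. neither $h_1\le h_2$ pointwise nor $h_2\le h_1$ pointwise. Then one of $\operatorname{supp}(h_1),\operatorname{supp}(h_2)$ links $X(h_1,h_2)$ and $X(h_2,h_1)$.
   Context: Write $\mathbb{R}^\times:=(0,\infty)$. A hockey-stick curve is a function of the form $h_L(x)=\mathbb{E}_{Z\sim L}[(1-xe^{-Z})_+]$, $x>0$, for a PLD $L$ (a distribution $L$ on $\mathbb{R}\cup\{\infty\}$ with $\mathbb{E}[e^{-Z}]\le1$, $e^{-\infty}=0$); equivalently a convex decreasing $h:\mathbb{R}^\times\to[0,1]$ with $\lim_{x\to0}h(x)=1$ and $h(x)\ge1-x$. It is non-degenerate if the corresponding $L$ has support in $\mathbb{R}$ containing at least two points. For $h:\mathbb{R}^\times\to\mathbb{R}$, $\operatorname{supp}(h):=\{x\in\mathbb{R}^\times: \text{for every open } U\ni x,\ h|_U \text{ is not affine}\}$. $X(h_1,h_2):=\{x\in\mathbb{R}^\times: h_1(x)<h_2(x)\}$. For $S,T_1,T_2\subseteq\mathbb{R}^\times$, $S$ links $T_1$ and $T_2$ if there is $c>0$ with $cS\cap T_1\ne\varnothing$ and $cS\cap T_2\ne\varnothing$, where $cS=\{cs:s\in S\}$. *)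

theory Defs
  imports "HOL-Probability.Probability"
begin

text \<open>A PLD L on the extended line R \<union> {\<infinity>} is represented by its restriction mu to the
  reals (a sub-probability measure on the Borel sets of R); the remaining mass
  1 - mu(R) sits at \<infinity>.  The condition E[exp(-Z)] \<le> 1 uses exp(-\<infinity>) = 0.\<close>

definition is_PLD :: "real measure \<Rightarrow> bool" where
  "is_PLD mu \<longleftrightarrow> sets mu = sets borel \<and> subprob_space mu \<and>
     (\<integral>\<^sup>+ z. ennreal (exp (- z)) \<partial>mu) \<le> 1"

text \<open>h_L(x) = E[(1 - x exp(-Z))_+]; the atom at \<infinity> contributes (1 - x*0)_+ = 1.\<close>

definition hockey_stick_of :: "real measure \<Rightarrow> real \<Rightarrow> real" where
  "hockey_stick_of mu x =
     (\<integral> z. max 0 (1 - x * exp (- z)) \<partial>mu) + (1 - measure mu (space mu))"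

definition measure_support :: "real measure \<Rightarrow> real set" where
  "measure_support mu = {z. \<forall>e>0. emeasure mu (ball z e) > 0}"

definition nondeg_hockey_stick :: "(real \<Rightarrow> real) \<Rightarrow> bool" where
  "nondeg_hockey_stick h \<longleftrightarrow>
     (\<exists>mu. is_PLD mu \<and> (\<forall>x>0. h x = hockey_stick_of mu x) \<and>
        (\<exists>a b. a \<noteq> b \<and> a \<in> measure_support mu \<and> b \<in> measure_support mu))"

definition hsupp :: "(real \<Rightarrow> real) \<Rightarrow> real set" where
  "hsupp h = {x. x > 0 \<and> (\<forall>U. open U \<and> x \<in> U \<longrightarrow>
       \<not> (\<exists>a b. \<forall>y \<in> U \<inter> {0<..}. h y = a * y + b))}"

definition Xset :: "(real \<Rightarrow> real) \<Rightarrow> (real \<Rightarrow> real) \<Rightarrow> real set" where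
  "Xset h1 h2 = {x. x > 0 \<and> h1 x < h2 x}"

definition links :: "real set \<Rightarrow> real set \<Rightarrow> real set \<Rightarrow> bool" where
  "links S T1 T2 \<longleftrightarrow> (\<exists>c>0. (\<lambda>s. c * s) ` S \<inter> T1 \<noteq> {} \<and> (\<lambda>s. c * s) ` S \<inter> T2 \<noteq> {})"

end

theory Submission
  imports Defs
begin


lemma links_sym: "links S A B = links S B A"
  unfolding links_def by blast

lemma conv_ineq:
  fixes h :: "real \<Rightarrow> real"
  assumes "convex_on {0<..} h" "0 < u" "u < x" "x < v"
  shows "h x * (v - u) \<le> (v - x) * h u + (x - u) * h v"
proof -
  define t where "t = (x - u) / (v - u)"
  have t0: "t \<ge> 0" "t \<le> 1" using assms by (auto simp: t_def field_simps)
  have tv: "t * (v - u) = x - u" using assms by (simp add: t_def)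
  have "(1 - t) * u + t * v = u + t * (v - u)" by (simp add: algebra_simps)
  then have xe: "x = (1 - t) *\<^sub>R u + t *\<^sub>R v" using tv by simp
  have "h x \<le> (1 - t) * h u + t * h v"
    using convex_onD[OF assms(1) t0, of u v] assms xe by auto
  then have "h x * (v - u) \<le> ((1 - t) * h u + t * h v) * (v - u)"
    using assms by (intro mult_right_mono) auto
  also have "\<dots> = h u * ((1 - t) * (v - u)) + h v * (t * (v - u))"
    by (simp add: algebra_simps)
  also have "(1 - t) * (v - u) = v - x" using tv by (simp add: algebra_simps)
  also have "h u * (v - x) + h v * (t * (v - u)) = (v - x) * h u + (x - u) * h v"
    using tv by simp
  finally show ?thesis .
qed

lemma hsupp_local:
  assumes "x > 0" "x \<notin> hsupp h"
  shows "\<exists>d>0. \<exists>a b. \<forall>y. \<bar>y - x\<bar> < d \<longrightarrow> y > 0 \<and> h y = a * y + b"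
proof -
  from assms obtain U a b where U: "open U" "x \<in> U" "\<forall>y\<in>U \<inter> {0<..}. h y = a * y + b"
    unfolding hsupp_def by blast
  from U(1,2) obtain e where e: "e > 0" "ball x e \<subseteq> U" by (meson openE)
  show ?thesis
  proof (intro exI conjI allI impI)
    show "min e x > 0" using e assms by auto
    fix y assume y: "\<bar>y - x\<bar> < min e x"
    then show "y > 0" by auto
    have "y \<in> ball x e" using y by (auto simp: dist_real_def)
    then show "h y = a * y + b" using e U y by auto
  qed
qed

lemma hsupp_nbhd:
  assumes "x > 0" "x \<notin> hsupp h"
  shows "\<exists>d>0. \<forall>y. \<bar>y - x\<bar> < d \<longrightarrow> y > 0 \<and> y \<notin> hsupp h"
proof -
  obtain d a b where d: "d > 0" "\<forall>y. \<bar>y - x\<bar> < d \<longrightarrow> y > 0 \<and> h y = a * y + b"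
    using hsupp_local[OF assms] by blast
  show ?thesis
  proof (intro exI conjI allI impI)
    show "d > 0" by fact
    fix y assume y: "\<bar>y - x\<bar> < d"
    then show "y > 0" using d by auto
    have "open (ball x d)" by simp
    moreover have "y \<in> ball x d" using y by (auto simp: dist_real_def)
    moreover have "\<forall>z\<in>ball x d \<inter> {0<..}. h z = a * z + b"
      using d by (auto simp: dist_real_def)
    ultimately show "y \<notin> hsupp h" unfolding hsupp_def by blast
  qed
qed

lemma hsupp_pos: "x \<in> hsupp h \<Longrightarrow> x > 0"
  unfolding hsupp_def by auto

lemma affine_eq2:
  fixes a1 b1 a2 b2 p q :: real
  assumes "p \<noteq> q" "a1 * p + b1 = a2 * p + b2" "a1 * q + b1 = a2 * q + b2"
  shows "a1 = a2 \<and> b1 = b2"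
proof -
  have "(a1 - a2) * (p - q) = 0" using assms by (simp add: algebra_simps)
  then have "a1 = a2" using assms(1) by auto
  then show ?thesis using assms by auto
qed

lemma aff_connected:
  fixes h :: "real \<Rightarrow> real"
  assumes T: "connected T" "open T" "T \<subseteq> {0<..}" "T \<inter> hsupp h = {}"
  shows "\<exists>a b. \<forall>x\<in>T. h x = a * x + b"
proof (cases "T = {}")
  case True then show ?thesis by auto
next
  case False
  then obtain x0 where x0: "x0 \<in> T" by auto
  define P where "P x p \<longleftrightarrow> (\<exists>d>0. \<forall>y. \<bar>y - x\<bar> < d \<longrightarrow> h y = fst p * y + snd p)" for x p
  define coef where "coef x = (SOME p. P x p)" for x
  have Pc: "P x (coef x)" if "x \<in> T" for x
  proof -
    have "x > 0" "x \<notin> hsupp h" using that T by auto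
    then obtain d a b where "d > 0" "\<forall>y. \<bar>y - x\<bar> < d \<longrightarrow> y > 0 \<and> h y = a * y + b"
      using hsupp_local by blast
    then have "P x (a, b)" unfolding P_def by auto
    then show ?thesis unfolding coef_def by (rule someI)
  qed
  have loc: "\<forall>a\<in>T. eventually (\<lambda>b. coef a = coef b) (at a within T)"
  proof
    fix x assume xT: "x \<in> T"
    from Pc[OF xT] obtain d where d: "d > 0" "\<forall>y. \<bar>y - x\<bar> < d \<longrightarrow> h y = fst (coef x) * y + snd (coef x)"
      unfolding P_def by blast
    show "eventually (\<lambda>b. coef x = coef b) (at x within T)"
      unfolding eventually_at
    proof (intro exI conjI ballI impI)
      show "d / 2 > 0" using d by auto
      fix y assume yT: "y \<in> T" and y: "y \<noteq> x \<and> dist y x < d / 2"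
      from Pc[OF yT] obtain e where e: "e > 0" "\<forall>z. \<bar>z - y\<bar> < e \<longrightarrow> h z = fst (coef y) * z + snd (coef y)"
        unfolding P_def by blast
      define k where "k = min e (d / 2) / 2"
      have k: "k > 0" "k < e" "k < d / 2" using e d by (auto simp: k_def)
      have 1: "fst (coef x) * y + snd (coef x) = fst (coef y) * y + snd (coef y)"
        using d(2)[rule_format, of y] e(2)[rule_format, of y] y e d by (auto simp: dist_real_def)
      have yk: "\<bar>y + k - x\<bar> < d" using y k unfolding dist_real_def by arith
      have 2: "fst (coef x) * (y + k) + snd (coef x) = fst (coef y) * (y + k) + snd (coef y)"
        using d(2)[rule_format, OF yk] e(2)[rule_format, of "y + k"] k by auto
      have "fst (coef x) = fst (coef y) \<and> snd (coef x) = snd (coef y)"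
        by (rule affine_eq2[OF _ 1 2]) (use k in auto)
      then show "coef x = coef y" by (simp add: prod_eq_iff)
    qed
  qed
  show ?thesis
  proof (intro exI ballI)
    fix x assume xT: "x \<in> T"
    have "coef x0 = coef x" by (rule connected_local_const[OF T(1) x0 xT loc])
    moreover from Pc[OF xT] have "h x = fst (coef x) * x + snd (coef x)"
      unfolding P_def by auto
    ultimately show "h x = fst (coef x0) * x + snd (coef x0)" by simp
  qed
qed

lemma links_near:
  assumes "s \<in> S" "s' \<in> S" "s \<in> T1" "open T1" "T2 \<subseteq> {0<..}" "s' > 0" "s > 0"
    and cl: "\<forall>e>0. \<exists>y\<in>T2. \<bar>y - s'\<bar> < e"
  shows "links S T1 T2"
proof -
  obtain d where d: "d > 0" "ball s d \<subseteq> T1" using assms(3,4) by (meson openE)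
  obtain y where y: "y \<in> T2" "\<bar>y - s'\<bar> < d * s' / s"
    using cl assms d by (metis divide_pos_pos mult_pos_pos)
  have y0: "y > 0" using y assms by auto
  define c where "c = y / s'"
  have c0: "c > 0" using y0 assms by (simp add: c_def)
  have "c * s - s = s * (y - s') / s'" using assms by (simp add: c_def field_simps)
  then have "\<bar>c * s - s\<bar> = s * \<bar>y - s'\<bar> / s'"
    using assms by (simp add: abs_mult abs_divide)
  also have "\<dots> < s * (d * s' / s) / s'"
    using y assms by (intro divide_strict_right_mono mult_strict_left_mono) auto
  also have "\<dots> = d" using assms by simp
  finally have "c * s \<in> ball s d" by (simp add: dist_real_def abs_minus_commute)
  then have "c * s \<in> T1" using d by auto
  moreover have "c * s' = y" using assms by (simp add: c_def)
  ultimately show ?thesis unfolding links_def using c0 assms y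
    by (intro exI[of _ c]) (auto intro!: image_eqI)
qed


locale hs2 =
  fixes f g :: "real \<Rightarrow> real"
  assumes cvx_f: "convex_on {0<..} f" and cvx_g: "convex_on {0<..} g"
    and bnd_f: "\<And>x. 0 < x \<Longrightarrow> 0 \<le> f x \<and> f x \<le> 1 \<and> 1 - x \<le> f x"
    and bnd_g: "\<And>x. 0 < x \<Longrightarrow> 0 \<le> g x \<and> g x \<le> 1 \<and> 1 - x \<le> g x"
    and two_f: "\<exists>a b. a \<in> hsupp f \<and> b \<in> hsupp f \<and> a < b"
    and two_g: "\<exists>a b. a \<in> hsupp g \<and> b \<in> hsupp g \<and> a < b"
begin

definition D where "D x = f x - g x"

sublocale sw: hs2 g f
  by unfold_locales (fact cvx_g, fact cvx_f, fact bnd_g, fact bnd_f, fact two_g, fact two_f)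

lemma swD: "sw.D x = - D x"
  by (simp add: D_def sw.D_def)

lemma cont_f: "continuous_on {0<..} f"
  by (rule convex_on_continuous[OF _ cvx_f]) simp

lemma cont_D: "continuous_on {0<..} D"
proof -
  have "continuous_on {0<..} g" by (rule convex_on_continuous[OF _ cvx_g]) simp
  then show ?thesis unfolding D_def[abs_def] using cont_f by (intro continuous_intros)
qed

lemma isCont_D: "x > 0 \<Longrightarrow> isCont D x"
  using cont_D continuous_on_eq_continuous_at[of "{0<..}" D] by auto

lemma contI_D: "0 < u \<Longrightarrow> continuous_on {u..v} D"
  by (rule continuous_on_subset[OF cont_D]) auto

lemma D_abs: "x > 0 \<Longrightarrow> \<bar>D x\<bar> \<le> x" "x > 0 \<Longrightarrow> \<bar>D x\<bar> \<le> 1"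
  using bnd_f[of x] bnd_g[of x] by (auto simp: D_def)

lemma X_iff: "x \<in> Xset f g \<longleftrightarrow> x > 0 \<and> D x < 0"
  by (auto simp: Xset_def D_def)

lemma Y_iff: "x \<in> Xset g f \<longleftrightarrow> x > 0 \<and> D x > 0"
  by (auto simp: Xset_def D_def)

lemma X_open: "open (Xset f g)"
proof -
  have "Xset f g = {0<..} \<inter> D -` {..<0}" by (auto simp: X_iff)
  moreover have "open (D -` {..<0} \<inter> {0<..})"
    using continuous_on_open_vimage[of "{0<..}" D] cont_D by auto
  ultimately show ?thesis by (simp add: Int_commute)
qed

lemma X_pos: "Xset f g \<subseteq> {0<..}" by (auto simp: X_iff)

lemma D_eps:
  assumes "x > 0" "e > 0"
  shows "\<exists>d>0. \<forall>y. \<bar>y - x\<bar> < d \<longrightarrow> \<bar>D y - D x\<bar> < e"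
proof -
  have "D \<midarrow>x\<rightarrow> D x" using isCont_D[OF assms(1)] by (simp add: isCont_def)
  then obtain d where d: "d > 0" "\<forall>y. y \<noteq> x \<and> norm (y - x) < d \<longrightarrow> norm (D y - D x) < e"
    using assms(2) unfolding LIM_eq by blast
  show ?thesis
  proof (intro exI[of _ d] conjI allI impI)
    fix y assume "\<bar>y - x\<bar> < d"
    then show "\<bar>D y - D x\<bar> < e" using d assms by (cases "y = x") auto
  qed (use d in auto)
qed

lemma zero_set_compact:
  assumes "0 < u"
  shows "compact {z \<in> {u..v}. D z = 0}"
proof -
  have "closed {z \<in> {u..v}. D z = 0}"
    by (rule continuous_closed_preimage_constant[OF contI_D[OF assms]]) simp
  moreover have "bounded {z \<in> {u..v}. D z = 0}"
    by (rule bounded_subset[of "{u..v}"]) auto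
  ultimately show ?thesis by (simp add: compact_eq_bounded_closed)
qed

lemma zero_first:
  assumes "0 < u" "\<exists>z\<in>{u..v}. D z = 0"
  shows "\<exists>z\<in>{u..v}. D z = 0 \<and> (\<forall>w\<in>{u..<z}. D w \<noteq> 0)"
proof -
  let ?S = "{z \<in> {u..v}. D z = 0}"
  have ne: "?S \<noteq> {}" using assms(2) by blast
  obtain z where z1: "z \<in> ?S" and z2: "\<forall>y\<in>?S. z \<le> y"
    using compact_attains_inf[OF zero_set_compact[OF assms(1)] ne] by blast
  have zz: "z \<in> {u..v}" "D z = 0" using z1 by simp_all
  have "\<forall>w\<in>{u..<z}. D w \<noteq> 0"
  proof (intro ballI notI)
    fix w assume w: "w \<in> {u..<z}" "D w = 0"
    then have "w \<in> ?S" using zz by simp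
    then have "z \<le> w" using z2 by blast
    then show False using w by simp
  qed
  then show ?thesis using zz by blast
qed

lemma zero_last:
  assumes "0 < u" "\<exists>z\<in>{u..v}. D z = 0"
  shows "\<exists>z\<in>{u..v}. D z = 0 \<and> (\<forall>w\<in>{z<..v}. D w \<noteq> 0)"
proof -
  let ?S = "{z \<in> {u..v}. D z = 0}"
  have ne: "?S \<noteq> {}" using assms(2) by blast
  obtain z where z1: "z \<in> ?S" and z2: "\<forall>y\<in>?S. y \<le> z"
    using compact_attains_sup[OF zero_set_compact[OF assms(1)] ne] by blast
  have zz: "z \<in> {u..v}" "D z = 0" using z1 by simp_all
  have "\<forall>w\<in>{z<..v}. D w \<noteq> 0"
  proof (intro ballI notI)
    fix w assume w: "w \<in> {z<..v}" "D w = 0"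
    then have "w \<in> ?S" using zz by simp
    then have "w \<le> z" using z2 by blast
    then show False using w by simp
  qed
  then show ?thesis using zz by blast
qed

lemma sign_const:
  assumes "0 < u" "u \<le> v" "\<forall>z\<in>{u..v}. D z \<noteq> 0"
  shows "D u < 0 \<longleftrightarrow> D v < 0"
proof
  assume u: "D u < 0"
  show "D v < 0"
  proof (rule ccontr)
    assume "\<not> D v < 0"
    then obtain z where "u \<le> z" "z \<le> v" "D z = 0"
      using IVT'[of D u 0 v, OF _ _ assms(2) contI_D[OF assms(1)]] u by force
    then show False using assms(3) by auto
  qed
next
  assume v: "D v < 0"
  show "D u < 0"
  proof (rule ccontr)
    assume "\<not> D u < 0"
    then obtain z where "u \<le> z" "z \<le> v" "D z = 0"
      using IVT2'[of D v 0 u, OF _ _ assms(2) contI_D[OF assms(1)]] v by force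
    then show False using assms(3) by auto
  qed
qed

lemma exists_zero:
  assumes "0 < u" "u \<le> v" "D u < 0" "D v > 0 \<or> D v = 0"
  shows "\<exists>z\<in>{u..v}. D z = 0"
proof (rule ccontr)
  assume "\<not> ?thesis"
  then have "D u < 0 \<longleftrightarrow> D v < 0" using sign_const[OF assms(1,2)] by blast
  then show False using assms by linarith
qed

lemma exists_zero':
  assumes "0 < u" "u \<le> v" "D u > 0" "D v < 0 \<or> D v = 0"
  shows "\<exists>z\<in>{u..v}. D z = 0"
proof (rule ccontr)
  assume "\<not> ?thesis"
  then have "D u < 0 \<longleftrightarrow> D v < 0" "D v \<noteq> 0" using sign_const[OF assms(1,2)] assms(2) by auto
  then show False using assms by linarith
qed

lemma L1:
  assumes "0 \<le> p" "p < x0" "x0 < q" "D q = 0" "\<forall>z\<in>{p<..<q}. D z < 0"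
    and eps: "\<forall>e>0. \<exists>u\<in>{p<..<x0}. \<bar>D u\<bar> < e"
  shows "\<exists>s\<in>hsupp f. p < s \<and> s < q"
proof (rule ccontr)
  assume "\<not> ?thesis"
  then have "{p<..<q} \<inter> hsupp f = {}" by auto
  moreover have "{p<..<q} \<subseteq> {0<..}" using assms(1) by auto
  ultimately obtain a b where ab: "\<forall>x\<in>{p<..<q}. f x = a * x + b"
    using aff_connected[of "{p<..<q}" f, OF convex_connected[OF convex_real_interval(8)] open_greaterThanLessThan] by blast
  have x0: "D x0 < 0" using assms(2,3,5) by auto
  define e where "e = - D x0 / 2"
  have e0: "e > 0" using x0 by (simp add: e_def)
  obtain u where u: "u \<in> {p<..<x0}" "\<bar>D u\<bar> < e" using eps e0 by blast
  obtain d where d: "d > 0" "\<forall>y. \<bar>y - q\<bar> < d \<longrightarrow> \<bar>D y - D q\<bar> < e"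
    using D_eps[of q e] assms(1,2,3) e0 by auto
  obtain mm where mm: "mm > 0" "mm \<le> q - x0" "mm \<le> d" using d(1) assms(3) by (intro that[of "min d (q - x0)"]) auto
  define v where "v = q - mm / 2"
  have v: "x0 < v" "v < q" "\<bar>v - q\<bar> < d" using mm unfolding v_def by auto
  then have Dv: "\<bar>D v\<bar> < e" using d(2) assms(4) by auto
  have u0: "u > 0" "u < x0" using u assms(1) by auto
  have cg: "g x0 * (v - u) \<le> (v - x0) * g u + (x0 - u) * g v"
    by (rule conv_ineq[OF cvx_g u0(1) u0(2) v(1)])
  have xin: "x0 \<in> {p<..<q}" "u \<in> {p<..<q}" "v \<in> {p<..<q}" using u0 v u assms(2,3) by auto
  have f3: "f x0 = a * x0 + b" "f u = a * u + b" "f v = a * v + b"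
    using ab xin by blast+
  have fa: "f x0 * (v - u) = (v - x0) * f u + (x0 - u) * f v"
    unfolding f3 by (simp add: algebra_simps)
  have key: "D x0 * (v - u) \<ge> (v - x0) * D u + (x0 - u) * D v"
  proof -
    have "D x0 * (v - u) = f x0 * (v - u) - g x0 * (v - u)" by (simp add: D_def algebra_simps)
    also have "\<dots> \<ge> ((v - x0) * f u + (x0 - u) * f v) - ((v - x0) * g u + (x0 - u) * g v)"
      using fa cg by linarith
    also have "((v - x0) * f u + (x0 - u) * f v) - ((v - x0) * g u + (x0 - u) * g v)
        = (v - x0) * D u + (x0 - u) * D v" by (simp add: D_def algebra_simps)
    finally show ?thesis .
  qed
  have eu: "- e \<le> D u" using u(2) by linarith
  have ev: "- e \<le> D v" using Dv by linarith
  have m1: "(v - x0) * (- e) \<le> (v - x0) * D u"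
    by (rule mult_left_mono[OF eu]) (use v(1) in linarith)
  have m2: "(x0 - u) * (- e) \<le> (x0 - u) * D v"
    by (rule mult_left_mono[OF ev]) (use u0(2) in linarith)
  have s2: "(v - x0) * (- e) + (x0 - u) * (- e) = (v - u) * (- e)" by (simp add: algebra_simps)
  have s3: "(v - u) * D x0 = D x0 * (v - u)" by (rule mult.commute)
  have "(v - u) * (- e) \<le> (v - u) * D x0" using key m1 m2 s2 s3 by linarith
  then have "- e \<le> D x0" by (rule mult_left_le_imp_le) (use u0 v in linarith)
  then show False using x0 by (simp add: e_def)
qed

lemma comp_left:
  assumes "x0 > 0" "D x0 \<noteq> 0"
  shows "\<exists>p. 0 \<le> p \<and> p < x0 \<and> (\<forall>z\<in>{p<..x0}. D z \<noteq> 0) \<and> (p > 0 \<longrightarrow> D p = 0)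
    \<and> (\<forall>e>0. \<exists>u\<in>{p<..<x0}. \<bar>D u\<bar> < e) \<and> (\<forall>z\<in>{0<..<x0}. D z = 0 \<longrightarrow> z \<le> p)"
proof (cases "\<exists>z\<in>{0<..<x0}. D z = 0")
  case True
  then obtain z1 where z1: "0 < z1" "z1 < x0" "D z1 = 0" by auto
  have "\<exists>z\<in>{z1..x0}. D z = 0" using z1 by auto
  then obtain p where p: "p \<in> {z1..x0}" "D p = 0" "\<forall>w\<in>{p<..x0}. D w \<noteq> 0"
    using zero_last[of z1 x0] z1 by blast
  have px: "p < x0" using p assms by (cases "p = x0") auto
  have p0: "p > 0" using p z1 by auto
  have A: "\<forall>e>0. \<exists>u\<in>{p<..<x0}. \<bar>D u\<bar> < e"
  proof (intro allI impI)
    fix e :: real assume e: "e > 0"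
    obtain d where d: "d > 0" "\<forall>y. \<bar>y - p\<bar> < d \<longrightarrow> \<bar>D y - D p\<bar> < e"
      using D_eps[OF p0 e] by blast
    obtain mm where mm: "mm > 0" "mm \<le> x0 - p" "mm \<le> d" using d px by (intro that[of "min d (x0 - p)"]) auto
    define u where "u = p + mm / 2"
    have u: "u \<in> {p<..<x0}" "\<bar>u - p\<bar> < d" using mm unfolding u_def by auto
    have "\<bar>D u\<bar> < e" using d(2) u(2) p(2) by auto
    then show "\<exists>u\<in>{p<..<x0}. \<bar>D u\<bar> < e" using u(1) by blast
  qed
  have B: "\<forall>z\<in>{0<..<x0}. D z = 0 \<longrightarrow> z \<le> p"
  proof (intro ballI impI)
    fix z assume z: "z \<in> {0<..<x0}" "D z = 0"
    show "z \<le> p"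
    proof (rule ccontr)
      assume "\<not> z \<le> p"
      then have "z \<in> {p<..x0}" using z by auto
      then show False using p(3) z(2) by blast
    qed
  qed
  show ?thesis using p0 px p(2,3) A B by (intro exI[of _ p]) simp
next
  case False
  have A: "\<forall>z\<in>{0<..x0}. D z \<noteq> 0"
  proof
    fix z assume z: "z \<in> {0<..x0}"
    show "D z \<noteq> 0"
    proof (cases "z = x0")
      case True then show ?thesis using assms by simp
    next
      case False then have "z \<in> {0<..<x0}" using z by auto
      then show ?thesis using \<open>\<not> (\<exists>z\<in>{0<..<x0}. D z = 0)\<close> by blast
    qed
  qed
  have B: "\<forall>e>0. \<exists>u\<in>{0<..<x0}. \<bar>D u\<bar> < e"
  proof (intro allI impI)
    fix e :: real assume e: "e > 0"
    define u where "u = min e x0 / 2"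
    have u: "u \<in> {0<..<x0}" "u < e" using e assms by (auto simp: u_def)
    then have "\<bar>D u\<bar> < e" using D_abs(1)[of u] by auto
    then show "\<exists>u\<in>{0<..<x0}. \<bar>D u\<bar> < e" using u by blast
  qed
  have C: "\<forall>z\<in>{0<..<x0}. D z = 0 \<longrightarrow> z \<le> 0" using False by blast
  show ?thesis using assms A B C by (intro exI[of _ 0]) simp
qed

lemma comp_right:
  assumes "x0 > 0" "D x0 \<noteq> 0" "w > x0" "D w = 0"
  shows "\<exists>q. x0 < q \<and> q \<le> w \<and> D q = 0 \<and> (\<forall>z\<in>{x0..<q}. D z \<noteq> 0)"
proof -
  have "\<exists>z\<in>{x0..w}. D z = 0" using assms by auto
  then obtain q where q: "q \<in> {x0..w}" "D q = 0" "\<forall>z\<in>{x0..<q}. D z \<noteq> 0"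
    using zero_first[of x0 w] assms by blast
  have "q \<noteq> x0" using q assms by auto
  then show ?thesis using q by (intro exI[of _ q]) auto
qed

end


lemma bounded_affine_ray:
  fixes a b \<gamma> :: real
  assumes "\<forall>x>\<gamma>. 0 \<le> a * x + b \<and> a * x + b \<le> 1" "\<gamma> \<ge> 0"
  shows "a = 0"
proof (rule ccontr)
  assume a: "a \<noteq> 0"
  define x where "x = \<gamma> + 1 + (\<bar>b\<bar> + 2) / \<bar>a\<bar>"
  have pa: "\<bar>a\<bar> > 0" using a by simp
  have q: "(\<bar>b\<bar> + 2) / \<bar>a\<bar> > 0" using pa by (intro divide_pos_pos) auto
  have x: "x > \<gamma>" using q by (simp add: x_def)
  have ax: "a * x = a * (\<gamma> + 1) + a * ((\<bar>b\<bar> + 2) / \<bar>a\<bar>)" by (simp add: x_def algebra_simps)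
  show False
  proof (cases "a > 0")
    case True
    then have "a * ((\<bar>b\<bar> + 2) / \<bar>a\<bar>) = \<bar>b\<bar> + 2" by simp
    moreover have "a * (\<gamma> + 1) \<ge> 0" using True assms(2) by simp
    ultimately have "a * x + b > 1" using ax by linarith
    then show False using assms(1) x by auto
  next
    case False
    then have an: "a < 0" using a by simp
    then have "a * ((\<bar>b\<bar> + 2) / \<bar>a\<bar>) = - (\<bar>b\<bar> + 2)" by simp
    moreover have "a * (\<gamma> + 1) \<le> 0" using an assms(2) by (simp add: mult_nonpos_nonneg)
    ultimately have "a * x + b < 0" using ax by linarith
    then show False using assms(1) x by auto
  qed
qed

context hs2
begin

lemma Z1:
  assumes "w > 0" "D w = 0" "w \<notin> hsupp g" "\<forall>e>0. \<exists>x. x > 0 \<and> D x < 0 \<and> \<bar>x - w\<bar> < e"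
  shows "\<forall>e>0. \<exists>y. y > 0 \<and> D y > 0 \<and> \<bar>y - w\<bar> < e"
proof (intro allI impI)
  fix e :: real assume e: "e > 0"
  obtain d a b where d: "d > 0" "\<forall>y. \<bar>y - w\<bar> < d \<longrightarrow> y > 0 \<and> g y = a * y + b"
    using hsupp_local[OF assms(1,3)] by blast
  obtain x where x: "x > 0" "D x < 0" "\<bar>x - w\<bar> < d" using assms(4) d(1) by blast
  have xw: "x \<noteq> w" using x(2) assms(2) by auto
  obtain k where k: "k > 0" "k < d" "k < e" using d(1) e by (intro that[of "min d e / 2"]) auto
  have gw: "g w = a * w + b" using d(2) d(1) by auto
  have gx: "g x = a * x + b" using d(2) x(3) by auto
  show "\<exists>y. y > 0 \<and> D y > 0 \<and> \<bar>y - w\<bar> < e"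
  proof (cases "x < w")
    case True
    define y where "y = w + k"
    have y: "w < y" "\<bar>y - w\<bar> < d" "\<bar>y - w\<bar> < e" using k by (auto simp: y_def)
    have y0: "y > 0" and gy: "g y = a * y + b" using d(2) y(2) by auto
    have cf: "f w * (y - x) \<le> (y - w) * f x + (w - x) * f y"
      by (rule conv_ineq[OF cvx_f x(1) True y(1)])
    have ge: "g w * (y - x) = (y - w) * g x + (w - x) * g y"
      unfolding gw gx gy by (simp add: algebra_simps)
    have fw: "f w = g w" using assms(2) by (simp add: D_def)
    have "0 \<le> (y - w) * (f x - g x) + (w - x) * (f y - g y)"
      using cf ge fw by (simp add: algebra_simps)
    then have A: "0 \<le> (y - w) * D x + (w - x) * D y" by (simp add: D_def)
    have B: "(y - w) * D x < 0" using y(1) x(2) by (simp add: mult_pos_neg)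
    have "(w - x) * D y > 0" using A B by linarith
    then have "D y > 0" using True by (simp add: zero_less_mult_iff)
    then show ?thesis using y0 y(3) by blast
  next
    case False
    then have xw2: "w < x" using xw by simp
    define y where "y = w - k"
    have y: "y < w" "\<bar>y - w\<bar> < d" "\<bar>y - w\<bar> < e" using k by (auto simp: y_def)
    have y0: "y > 0" and gy: "g y = a * y + b" using d(2) y(2) by auto
    have cf: "f w * (x - y) \<le> (x - w) * f y + (w - y) * f x"
      by (rule conv_ineq[OF cvx_f y0 y(1) xw2])
    have ge: "g w * (x - y) = (x - w) * g y + (w - y) * g x"
      unfolding gw gx gy by (simp add: algebra_simps)
    have fw: "f w = g w" using assms(2) by (simp add: D_def)
    have "0 \<le> (x - w) * (f y - g y) + (w - y) * (f x - g x)"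
      using cf ge fw by (simp add: algebra_simps)
    then have A: "0 \<le> (x - w) * D y + (w - y) * D x" by (simp add: D_def)
    have B: "(w - y) * D x < 0" using y(1) x(2) by (simp add: mult_pos_neg)
    have "(x - w) * D y > 0" using A B by linarith
    then have "D y > 0" using xw2 by (simp add: zero_less_mult_iff)
    then show ?thesis using y0 y(3) by blast
  qed
qed

lemma aff_ends:
  assumes "0 < a" "a < b" "\<forall>x\<in>{a<..<b}. D x = m * x + c"
  shows "D a = m * a + c" "D b = m * b + c"
proof -
  have ca: "(D \<longlongrightarrow> D a) (at a)" using isCont_D[OF assms(1)] by (simp add: isCont_def)
  have cb: "(D \<longlongrightarrow> D b) (at b)" using isCont_D[of b] assms(1,2) by (simp add: isCont_def)
  have ea: "eventually (\<lambda>x. m * x + c = D x) (at_right a)"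
    using eventually_at_right_real[OF assms(2)] by eventually_elim (use assms(3) in auto)
  have eb: "eventually (\<lambda>x. m * x + c = D x) (at_left b)"
    using eventually_at_left_real[OF assms(2)] by eventually_elim (use assms(3) in auto)
  have la: "((\<lambda>x. m * x + c) \<longlongrightarrow> m * a + c) (at_right a)" by (intro tendsto_intros)
  have lb: "((\<lambda>x. m * x + c) \<longlongrightarrow> m * b + c) (at_left b)" by (intro tendsto_intros)
  have "(D \<longlongrightarrow> m * a + c) (at_right a)" by (rule Lim_transform_eventually[OF la ea])
  moreover have "(D \<longlongrightarrow> D a) (at_right a)" using ca filterlim_at_split by blast
  ultimately show "D a = m * a + c"
    using tendsto_unique[OF trivial_limit_at_right_real] by blast
  have "(D \<longlongrightarrow> m * b + c) (at_left b)" by (rule Lim_transform_eventually[OF lb eb])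
  moreover have "(D \<longlongrightarrow> D b) (at_left b)" using cb filterlim_at_split by blast
  ultimately show "D b = m * b + c"
    using tendsto_unique[OF trivial_limit_at_left_real] by blast
qed

lemma link_opp:
  assumes "a \<in> S" "b \<in> S" "S \<subseteq> {0<..}" "c > 0" "D (c * a) * D (c * b) < 0"
  shows "links S (Xset f g) (Xset g f)"
proof -
  have a0: "c * a > 0" "c * b > 0" using assms by auto
  have ia: "c * a \<in> (\<lambda>s. c * s) ` S" "c * b \<in> (\<lambda>s. c * s) ` S" using assms by auto
  show ?thesis
  proof (cases "D (c * a) < 0")
    case True
    then have "D (c * b) > 0" using assms(5) by (simp add: mult_less_0_iff)
    then show ?thesis unfolding links_def using True a0 ia assms(4)
      by (intro exI[of _ c]) (auto simp: X_iff Y_iff)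
  next
    case False
    then have "D (c * a) > 0" "D (c * b) < 0" using assms(5) by (auto simp: mult_less_0_iff)
    then show ?thesis unfolding links_def using a0 ia assms(4)
      by (intro exI[of _ c]) (auto simp: X_iff Y_iff)
  qed
qed

end


lemma sign_trans: "(p::real) * q > 0 \<Longrightarrow> q * r < 0 \<Longrightarrow> p * r < 0"
  by (auto simp: zero_less_mult_iff mult_less_0_iff)

locale hs2A = hs2 +
  assumes nlf: "\<not> links (hsupp f) (Xset f g) (Xset g f)"
    and nlg: "\<not> links (hsupp g) (Xset f g) (Xset g f)"
    and sepf: "\<And>s. s \<in> hsupp f \<Longrightarrow> \<exists>e>0. \<forall>y. y > 0 \<and> D y > 0 \<longrightarrow> e \<le> \<bar>y - s\<bar>"
    and sepg: "\<And>s. s \<in> hsupp g \<Longrightarrow> \<exists>e>0. \<forall>x. x > 0 \<and> D x < 0 \<longrightarrow> e \<le> \<bar>x - s\<bar>"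
    and exX: "\<exists>x>0. D x < 0" and exY: "\<exists>y>0. D y > 0"
begin

lemma notin_g_of_clX:
  assumes "\<forall>e>0. \<exists>x. x > 0 \<and> D x < 0 \<and> \<bar>x - w\<bar> < e"
  shows "w \<notin> hsupp g"
proof
  assume "w \<in> hsupp g"
  then obtain e where e: "e > 0" "\<forall>x. x > 0 \<and> D x < 0 \<longrightarrow> e \<le> \<bar>x - w\<bar>" using sepg by blast
  obtain x where "x > 0" "D x < 0" "\<bar>x - w\<bar> < e" using assms e(1) by blast
  then show False using e(2) by force
qed

lemma notin_f_of_clY:
  assumes "\<forall>e>0. \<exists>y. y > 0 \<and> D y > 0 \<and> \<bar>y - w\<bar> < e"
  shows "w \<notin> hsupp f"
proof
  assume "w \<in> hsupp f"
  then obtain e where e: "e > 0" "\<forall>y. y > 0 \<and> D y > 0 \<longrightarrow> e \<le> \<bar>y - w\<bar>" using sepf by blast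
  obtain y where "y > 0" "D y > 0" "\<bar>y - w\<bar> < e" using assms e(1) by blast
  then show False using e(2) by force
qed

lemma crossA:
  assumes "w > 0" "D w = 0" "\<forall>e>0. \<exists>x. x > 0 \<and> D x < 0 \<and> \<bar>x - w\<bar> < e"
  shows "\<exists>d m. d > 0 \<and> m \<noteq> 0 \<and> (\<forall>x. \<bar>x - w\<bar> < d \<longrightarrow> x > 0 \<and> D x = m * (x - w))"
proof -
  have ng: "w \<notin> hsupp g" by (rule notin_g_of_clX[OF assms(3)])
  have cy: "\<forall>e>0. \<exists>y. y > 0 \<and> D y > 0 \<and> \<bar>y - w\<bar> < e" by (rule Z1[OF assms(1,2) ng assms(3)])
  have nf: "w \<notin> hsupp f" by (rule notin_f_of_clY[OF cy])
  obtain d1 a1 b1 where d1: "d1 > 0" "\<forall>y. \<bar>y - w\<bar> < d1 \<longrightarrow> y > 0 \<and> f y = a1 * y + b1"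
    using hsupp_local[OF assms(1) nf] by blast
  obtain d2 a2 b2 where d2: "d2 > 0" "\<forall>y. \<bar>y - w\<bar> < d2 \<longrightarrow> y > 0 \<and> g y = a2 * y + b2"
    using hsupp_local[OF assms(1) ng] by blast
  obtain d where d: "d > 0" "d \<le> d1" "d \<le> d2" using d1(1) d2(1) by (intro that[of "min d1 d2"]) auto
  have fw: "f w = a1 * w + b1" using d1 by auto
  have gw: "g w = a2 * w + b2" using d2 by auto
  have Dw: "(a1 - a2) * w + (b1 - b2) = 0" using assms(2) fw gw by (simp add: D_def algebra_simps)
  have Dx: "\<forall>x. \<bar>x - w\<bar> < d \<longrightarrow> x > 0 \<and> D x = (a1 - a2) * (x - w)"
  proof (intro allI impI)
    fix x assume x: "\<bar>x - w\<bar> < d"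
    then have x1: "\<bar>x - w\<bar> < d1" and x2: "\<bar>x - w\<bar> < d2" using d by auto
    have "f x = a1 * x + b1" "g x = a2 * x + b2" "x > 0" using d1(2) d2(2) x1 x2 by auto
    moreover have "(a1 - a2) * (x - w) = (a1 - a2) * x + (b1 - b2)" using Dw by (simp add: algebra_simps)
    ultimately show "x > 0 \<and> D x = (a1 - a2) * (x - w)" by (simp add: D_def algebra_simps)
  qed
  have "a1 - a2 \<noteq> 0"
  proof
    assume m: "a1 - a2 = 0"
    obtain x where "x > 0" "D x < 0" "\<bar>x - w\<bar> < d" using assms(3) d(1) by blast
    then show False using Dx m by force
  qed
  then show ?thesis using Dx d(1) by blast
qed

lemma crossB:
  assumes "w > 0" "D w = 0" "\<forall>e>0. \<exists>y. y > 0 \<and> D y > 0 \<and> \<bar>y - w\<bar> < e"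
  shows "\<forall>e>0. \<exists>x. x > 0 \<and> D x < 0 \<and> \<bar>x - w\<bar> < e"
proof -
  have nf: "w \<notin> hsupp f" by (rule notin_f_of_clY[OF assms(3)])
  have a2: "sw.D w = 0" using assms(2) by (simp add: swD)
  have a3: "\<forall>e>0. \<exists>x. x > 0 \<and> sw.D x < 0 \<and> \<bar>x - w\<bar> < e" using assms(3) by (simp add: swD)
  have "\<forall>e>0. \<exists>y. y > 0 \<and> sw.D y > 0 \<and> \<bar>y - w\<bar> < e" by (rule sw.Z1[OF assms(1) a2 nf a3])
  then show ?thesis by (simp add: swD)
qed

lemma cross_CR:
  assumes "w > 0" "D w = 0"
  shows "\<exists>d m. d > 0 \<and> m \<noteq> 0 \<and> (\<forall>x. \<bar>x - w\<bar> < d \<longrightarrow> x > 0 \<and> D x = m * (x - w))"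
proof -
  define CR where "CR w \<longleftrightarrow> (\<exists>d m. d > 0 \<and> m \<noteq> 0 \<and> (\<forall>x. \<bar>x - w\<bar> < d \<longrightarrow> x > 0 \<and> D x = m * (x - w)))" for w
  define O1 where "O1 = {w. w > 0 \<and> (\<exists>d>0. \<forall>x. \<bar>x - w\<bar> < d \<longrightarrow> D x = 0)}"
  define O2 where "O2 = {w. w > 0 \<and> (D w \<noteq> 0 \<or> CR w)}"
  have o1: "open O1"
    unfolding open_dist
  proof (intro ballI)
    fix w assume "w \<in> O1"
    then obtain d where d: "w > 0" "d > 0" "\<forall>x. \<bar>x - w\<bar> < d \<longrightarrow> D x = 0" by (auto simp: O1_def)
    show "\<exists>e>0. \<forall>y. dist y w < e \<longrightarrow> y \<in> O1"
    proof (intro exI[of _ "min d w / 2"] conjI allI impI)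
      show "min d w / 2 > 0" using d by auto
      fix y assume y: "dist y w < min d w / 2"
      then have y1: "\<bar>y - w\<bar> < d / 2" "\<bar>y - w\<bar> < w / 2" by (auto simp: dist_real_def)
      have "\<forall>x. \<bar>x - y\<bar> < d / 2 \<longrightarrow> D x = 0"
      proof (intro allI impI)
        fix x assume "\<bar>x - y\<bar> < d / 2"
        then have "\<bar>x - w\<bar> < d" using y1 by linarith
        then show "D x = 0" using d by auto
      qed
      moreover have "y > 0" using y1 d by linarith
      ultimately show "y \<in> O1" unfolding O1_def using d(2) by (auto intro!: exI[of _ "d / 2"])
    qed
  qed
  have o2: "open O2"
    unfolding open_dist
  proof (intro ballI)
    fix w assume w: "w \<in> O2"
    show "\<exists>e>0. \<forall>y. dist y w < e \<longrightarrow> y \<in> O2"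
    proof (cases "D w \<noteq> 0")
      case True
      have w0: "w > 0" using w by (auto simp: O2_def)
      obtain d where d: "d > 0" "\<forall>y. \<bar>y - w\<bar> < d \<longrightarrow> \<bar>D y - D w\<bar> < \<bar>D w\<bar>"
        using D_eps[OF w0, of "\<bar>D w\<bar>"] True by auto
      show ?thesis
      proof (intro exI[of _ "min d w"] conjI allI impI)
        show "min d w > 0" using d w0 by auto
        fix y assume "dist y w < min d w"
        then have y: "\<bar>y - w\<bar> < d" "\<bar>y - w\<bar> < w" by (auto simp: dist_real_def)
        then have "D y \<noteq> 0" using d(2) by force
        moreover have "y > 0" using y by linarith
        ultimately show "y \<in> O2" by (simp add: O2_def)
      qed
    next
      case False
      then have "CR w" using w by (auto simp: O2_def)
      then obtain d m where dm: "d > 0" "m \<noteq> 0" "\<forall>x. \<bar>x - w\<bar> < d \<longrightarrow> x > 0 \<and> D x = m * (x - w)"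
        unfolding CR_def by blast
      show ?thesis
      proof (intro exI[of _ d] conjI allI impI)
        show "d > 0" by fact
        fix y assume "dist y w < d"
        then have y: "\<bar>y - w\<bar> < d" by (auto simp: dist_real_def)
        show "y \<in> O2"
        proof (cases "y = w")
          case True then show ?thesis using w by simp
        next
          case False
          then have "D y \<noteq> 0" using dm y by auto
          then show ?thesis using dm y by (simp add: O2_def)
        qed
      qed
    qed
  qed
  have disj: "O2 \<inter> O1 \<inter> {0<..} = {}"
  proof (rule ccontr)
    assume "O2 \<inter> O1 \<inter> {0<..} \<noteq> {}"
    then obtain w where w: "w \<in> O1" "w \<in> O2" by auto
    then obtain d1 where d1: "d1 > 0" "\<forall>x. \<bar>x - w\<bar> < d1 \<longrightarrow> D x = 0" by (auto simp: O1_def)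
    then have "D w = 0" by auto
    then have "CR w" using w by (auto simp: O2_def)
    then obtain d m where dm: "d > 0" "m \<noteq> 0" "\<forall>x. \<bar>x - w\<bar> < d \<longrightarrow> x > 0 \<and> D x = m * (x - w)"
      unfolding CR_def by blast
    obtain k where k: "k > 0" "k < d" "k < d1" using dm(1) d1(1) by (intro that[of "min d d1 / 2"]) auto
    have "D (w + k) = 0" using d1 k by auto
    moreover have "D (w + k) = m * k" using dm k by auto
    ultimately show False using dm(2) k(1) by simp
  qed
  have cover: "{0<..} \<subseteq> O2 \<union> O1"
  proof
    fix w :: real assume "w \<in> {0<..}"
    then have w0: "w > 0" by simp
    show "w \<in> O2 \<union> O1"
    proof (cases "D w = 0")
      case False then show ?thesis using w0 by (simp add: O2_def)
    next
      case Dw: True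
      show ?thesis
      proof (cases "\<forall>e>0. \<exists>x. x > 0 \<and> D x < 0 \<and> \<bar>x - w\<bar> < e")
        case True
        then have "CR w" unfolding CR_def by (rule crossA[OF w0 Dw])
        then show ?thesis using w0 by (simp add: O2_def)
      next
        case nX: False
        show ?thesis
        proof (cases "\<forall>e>0. \<exists>y. y > 0 \<and> D y > 0 \<and> \<bar>y - w\<bar> < e")
          case True
          then have "\<forall>e>0. \<exists>x. x > 0 \<and> D x < 0 \<and> \<bar>x - w\<bar> < e" by (rule crossB[OF w0 Dw])
          then show ?thesis using nX by blast
        next
          case nY: False
          obtain e1 where e1: "e1 > 0" "\<forall>x. x > 0 \<and> D x < 0 \<longrightarrow> \<not> \<bar>x - w\<bar> < e1" using nX by blast
          obtain e2 where e2: "e2 > 0" "\<forall>x. x > 0 \<and> D x > 0 \<longrightarrow> \<not> \<bar>x - w\<bar> < e2" using nY by blast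
          obtain d where d: "d > 0" "d \<le> e1" "d \<le> e2" "d \<le> w"
            using e1(1) e2(1) w0 by (intro that[of "min (min e1 e2) w"]) auto
          have "\<forall>x. \<bar>x - w\<bar> < d \<longrightarrow> D x = 0"
          proof (intro allI impI)
            fix x assume x: "\<bar>x - w\<bar> < d"
            then have "x > 0" "\<bar>x - w\<bar> < e1" "\<bar>x - w\<bar> < e2" using d by linarith+
            then show "D x = 0" using e1(2) e2(2) by force
          qed
          then show ?thesis using w0 d(1) by (auto simp: O1_def)
        qed
      qed
    qed
  qed
  have conn: "connected ({0<..} :: real set)" by (rule convex_connected) simp
  have "O2 \<inter> {0<..} \<noteq> {}" using exX by (auto simp: O2_def)
  then have "O1 \<inter> {0<..} = {}"
    using connectedD[OF conn o2 o1 disj cover] by blast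
  then have "w \<in> O2" using cover assms(1) by auto
  then show ?thesis using assms(2) by (auto simp: O2_def CR_def)
qed

lemma cross_opp:
  assumes "z > 0" "D z = 0"
  shows "\<exists>d>0. d \<le> z \<and> (\<forall>x y. z - d < x \<and> x < z \<and> z < y \<and> y < z + d \<longrightarrow> D x * D y < 0)"
proof -
  obtain d m where dm: "d > 0" "m \<noteq> 0" "\<forall>x. \<bar>x - z\<bar> < d \<longrightarrow> x > 0 \<and> D x = m * (x - z)"
    using cross_CR[OF assms] by blast
  show ?thesis
  proof (intro exI[of _ "min d z"] conjI allI impI)
    show "min d z > 0" "min d z \<le> z" using dm assms by auto
    fix x y assume xy: "z - min d z < x \<and> x < z \<and> z < y \<and> y < z + min d z"
    then have "\<bar>x - z\<bar> < d" "\<bar>y - z\<bar> < d" by auto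
    then have e: "D x = m * (x - z)" "D y = m * (y - z)" using dm by auto
    have "D x * D y = (m * (x - z)) * (m * (y - z))" unfolding e ..
    also have "\<dots> = (m * m) * ((x - z) * (y - z))" by (simp add: algebra_simps)
    finally have "D x * D y = (m * m) * ((x - z) * (y - z))" .
    moreover have "m * m > 0" using dm(2) using not_real_square_gt_zero by blast
    moreover have "(x - z) * (y - z) < 0" using xy by (simp add: mult_less_0_iff)
    ultimately show "D x * D y < 0" by (simp add: mult_pos_neg)
  qed
qed

lemma cross_cl:
  assumes "w > 0" "D w = 0"
  shows "\<forall>e>0. \<exists>x. x > 0 \<and> D x < 0 \<and> \<bar>x - w\<bar> < e"
    and "\<forall>e>0. \<exists>y. y > 0 \<and> D y > 0 \<and> \<bar>y - w\<bar> < e"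
proof -
  obtain d where d: "d > 0" "d \<le> w" "\<forall>x y. w - d < x \<and> x < w \<and> w < y \<and> y < w + d \<longrightarrow> D x * D y < 0"
    using cross_opp[OF assms] by blast
  have both: "\<exists>x y. x > 0 \<and> y > 0 \<and> \<bar>x - w\<bar> < e \<and> \<bar>y - w\<bar> < e \<and> D x < 0 \<and> D y > 0" if e: "e > 0" for e
  proof -
    obtain k where k: "k > 0" "k < d" "k < e" using d(1) e by (intro that[of "min d e / 2"]) auto
    have p: "D (w - k) * D (w + k) < 0" using d k by auto
    have pos: "w - k > 0" "w + k > 0" using k d by auto
    have ab: "\<bar>(w - k) - w\<bar> < e" "\<bar>(w + k) - w\<bar> < e" using k by auto
    show ?thesis
    proof (cases "D (w - k) < 0")
      case True
      then have "D (w + k) > 0" using p by (simp add: mult_less_0_iff)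
      then show ?thesis using True pos ab by blast
    next
      case False
      then have "D (w - k) > 0" "D (w + k) < 0" using p by (auto simp: mult_less_0_iff)
      then show ?thesis using pos ab by blast
    qed
  qed
  show "\<forall>e>0. \<exists>x. x > 0 \<and> D x < 0 \<and> \<bar>x - w\<bar> < e" using both by blast
  show "\<forall>e>0. \<exists>y. y > 0 \<and> D y > 0 \<and> \<bar>y - w\<bar> < e" using both by blast
qed

lemma zero_notin:
  assumes "w > 0" "D w = 0"
  shows "w \<notin> hsupp f" "w \<notin> hsupp g"
  using notin_f_of_clY[OF cross_cl(2)[OF assms]] notin_g_of_clX[OF cross_cl(1)[OF assms]] by auto

lemma Sf_neg: "s \<in> hsupp f \<Longrightarrow> D s < 0"
proof -
  assume s: "s \<in> hsupp f"
  have s0: "s > 0" using hsupp_pos[OF s] .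
  have "D s \<noteq> 0" using zero_notin(1)[OF s0] s by auto
  moreover have "\<not> D s > 0"
  proof
    assume "D s > 0"
    obtain e where e: "e > 0" "\<forall>y. y > 0 \<and> D y > 0 \<longrightarrow> e \<le> \<bar>y - s\<bar>" using sepf[OF s] by blast
    then show False using \<open>D s > 0\<close> s0 by force
  qed
  ultimately show "D s < 0" by linarith
qed

lemma Sg_pos: "s \<in> hsupp g \<Longrightarrow> D s > 0"
proof -
  assume s: "s \<in> hsupp g"
  have s0: "s > 0" using hsupp_pos[OF s] .
  have "D s \<noteq> 0" using zero_notin(2)[OF s0] s by auto
  moreover have "\<not> D s < 0"
  proof
    assume "D s < 0"
    obtain e where e: "e > 0" "\<forall>x. x > 0 \<and> D x < 0 \<longrightarrow> e \<le> \<bar>x - s\<bar>" using sepg[OF s] by blast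
    then show False using \<open>D s < 0\<close> s0 by force
  qed
  ultimately show "D s > 0" by linarith
qed

lemma same_sign:
  assumes "0 < u" "u \<le> v" "\<forall>z\<in>{u..v}. D z \<noteq> 0"
  shows "D u * D v > 0"
proof -
  have "D u < 0 \<longleftrightarrow> D v < 0" by (rule sign_const[OF assms])
  moreover have "D u \<noteq> 0" "D v \<noteq> 0" using assms by auto
  ultimately show ?thesis by (auto simp: zero_less_mult_iff)
qed

end


lemma sign_trans2: "(p::real) * q < 0 \<Longrightarrow> q * r > 0 \<Longrightarrow> p * r < 0"
  by (auto simp: zero_less_mult_iff mult_less_0_iff)

lemma sign_pick:
  fixes p q P Q s :: real
  assumes "p * s > 0" "q * s > 0" "P * Q < 0"
  shows "p * P < 0 \<or> q * Q < 0"
proof (cases "s > 0")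
  case True
  then have "p > 0" "q > 0" using assms(1,2) by (auto simp: zero_less_mult_iff)
  moreover have "P < 0 \<or> Q < 0" using assms(3) by (auto simp: mult_less_0_iff)
  ultimately show ?thesis by (auto simp: mult_pos_neg)
next
  case False
  then have "s < 0" using assms(1) by (cases "s = 0") auto
  then have "p < 0" "q < 0" using assms(1,2) by (auto simp: zero_less_mult_iff)
  moreover have "P > 0 \<or> Q > 0" using assms(3) by (auto simp: mult_less_0_iff)
  ultimately show ?thesis by (auto simp: mult_neg_pos)
qed

lemma small2: "(a::real) > 0 \<Longrightarrow> b > 0 \<Longrightarrow> \<exists>k. k > 0 \<and> k < a \<and> k < b"
  by (intro exI[of _ "min a b / 2"]) (auto simp: min_def)

context hs2A
begin


lemma same_sign':
  assumes "0 < u" "0 < v" "\<forall>z. min u v \<le> z \<and> z \<le> max u v \<longrightarrow> D z \<noteq> 0"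
  shows "D u * D v > 0"
proof (cases "u \<le> v")
  case True
  then show ?thesis using same_sign[OF assms(1) True] assms(3) by (auto simp: min_def max_def)
next
  case False
  then have "D v * D u > 0" using same_sign[OF assms(2), of u] assms(3) by (auto simp: min_def max_def)
  then show ?thesis by (simp add: mult.commute)
qed

lemma eps_right:
  assumes "p > 0" "D p = 0" "p < x"
  shows "\<forall>e>0. \<exists>u\<in>{p<..<x}. \<bar>D u\<bar> < e"
proof (intro allI impI)
  fix e :: real assume e: "e > 0"
  obtain d where d: "d > 0" "\<forall>y. \<bar>y - p\<bar> < d \<longrightarrow> \<bar>D y - D p\<bar> < e"
    using D_eps[OF assms(1) e] by blast
  obtain mm where mm: "mm > 0" "mm \<le> x - p" "mm \<le> d" using d(1) assms(3) by (intro that[of "min d (x - p)"]) auto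
  define u where "u = p + mm / 2"
  have u: "u \<in> {p<..<x}" "\<bar>u - p\<bar> < d" using mm unfolding u_def by auto
  have "\<bar>D u\<bar> < e" using d(2) u(2) assms(2) by auto
  then show "\<exists>u\<in>{p<..<x}. \<bar>D u\<bar> < e" using u(1) by blast
qed

lemma hsupp_sub: "hsupp h \<subseteq> {0<..}"
  using hsupp_pos by auto

lemma ex_zero: "\<exists>z>0. D z = 0"
proof -
  obtain x0 where x0: "x0 > 0" "D x0 < 0" using exX by blast
  obtain y0 where y0: "y0 > 0" "D y0 > 0" using exY by blast
  show ?thesis
  proof (cases "x0 \<le> y0")
    case True
    then obtain z where "z \<in> {x0..y0}" "D z = 0" using exists_zero[OF x0(1) True x0(2)] y0 by blast
    then show ?thesis using x0 by (intro exI[of _ z]) auto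
  next
    case False
    then have yx: "y0 \<le> x0" by simp
    obtain z where "z \<in> {y0..x0}" "D z = 0" using exists_zero'[OF y0(1) yx y0(2)] x0 by blast
    then show ?thesis using y0 by (intro exI[of _ z]) auto
  qed
qed

lemma acc0:
  assumes e: "e > 0"
  shows "\<exists>z. 0 < z \<and> z < e \<and> D z = 0"
proof (rule ccontr)
  assume nz: "\<not> ?thesis"
  obtain z' where z': "z' > 0" "D z' = 0" using ex_zero by blast
  have ze: "z' \<ge> e" using nz z' by force
  have "\<exists>z\<in>{e/2..z'}. D z = 0" using z' ze e by (intro bexI[of _ z']) auto
  then obtain zs where zs: "zs \<in> {e/2..z'}" "D zs = 0" "\<forall>w\<in>{e/2..<zs}. D w \<noteq> 0"
    using zero_first[of "e/2" z'] e by auto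
  have zs0: "zs > 0" using zs(1) e by auto
  have zse: "zs \<ge> e" using nz zs0 zs(2) by force
  have nzs: "\<forall>w. 0 < w \<and> w < zs \<longrightarrow> D w \<noteq> 0"
  proof (intro allI impI)
    fix w assume w: "0 < w \<and> w < zs"
    show "D w \<noteq> 0"
    proof (cases "w < e")
      case True then show ?thesis using nz w by blast
    next
      case False then have "w \<in> {e/2..<zs}" using w e by auto
      then show ?thesis using zs(3) by blast
    qed
  qed
  obtain a b where ab: "a \<in> hsupp f" "b \<in> hsupp f" "a < b" using two_f by blast
  have a0: "a > 0" using hsupp_pos[OF ab(1)] .
  obtain d where d: "d > 0" "d \<le> zs" "\<forall>x y. zs - d < x \<and> x < zs \<and> zs < y \<and> y < zs + d \<longrightarrow> D x * D y < 0"
    using cross_opp[OF zs0 zs(2)] by blast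
  have q0: "zs * (b - a) / a > 0" using zs0 ab(3) a0 by auto
  obtain k where k: "k > 0" "k < d" "k < zs * (b - a) / a" using small2[OF d(1) q0] by blast
  define y where "y = zs + k"
  define x where "x = zs - d / 2"
  have xy: "D x * D y < 0" using d k by (auto simp: x_def y_def)
  have x0: "x > 0" "x < zs" using d by (auto simp: x_def)
  have "k * a < zs * (b - a)" using k(3) a0 by (simp add: pos_less_divide_eq)
  then have "y * a < zs * b" by (simp add: y_def algebra_simps)
  then have ya: "y * a / b < zs" using ab(3) a0 by (simp add: pos_divide_less_eq)
  define c where "c = y / b"
  have b0: "b > 0" using a0 ab(3) by simp
  have y0: "y > 0" using zs0 k by (simp add: y_def)
  have c0: "c > 0" using y0 b0 by (simp add: c_def)
  have ca: "c * a = y * a / b" by (simp add: c_def)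
  have cb: "c * b = y" using b0 by (simp add: c_def)
  have ca0: "c * a > 0" using c0 a0 by simp
  have "D (c * a) * D x > 0"
    by (rule same_sign'[OF ca0 x0(1)]) (use nzs ya ca ca0 x0 in \<open>auto simp: min_def max_def\<close>)
  then have "D (c * a) * D (c * b) < 0" using sign_trans xy cb by metis
  then have "links (hsupp f) (Xset f g) (Xset g f)"
    by (rule link_opp[OF ab(1) ab(2) hsupp_sub c0])
  then show False using nlf by blast
qed

lemma accInf: "\<exists>z>M. D z = 0"
proof (rule ccontr)
  assume nz: "\<not> ?thesis"
  obtain z' where z': "z' > 0" "D z' = 0" using ex_zero by blast
  have zM: "z' \<le> M" using nz z' by force
  have "\<exists>z\<in>{z'..M}. D z = 0" using z' zM by (intro bexI[of _ z']) auto
  then obtain zs where zs: "zs \<in> {z'..M}" "D zs = 0" "\<forall>w\<in>{zs<..M}. D w \<noteq> 0"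
    using zero_last[of z' M] z' by auto
  have zs0: "zs > 0" using zs(1) z' by auto
  have nzs: "\<forall>w. zs < w \<longrightarrow> D w \<noteq> 0"
  proof (intro allI impI)
    fix w assume w: "zs < w"
    show "D w \<noteq> 0"
    proof (cases "w \<le> M")
      case True then show ?thesis using zs(3) w by auto
    next
      case False then show ?thesis using nz by auto
    qed
  qed
  obtain a b where ab: "a \<in> hsupp f" "b \<in> hsupp f" "a < b" using two_f by blast
  have a0: "a > 0" using hsupp_pos[OF ab(1)] .
  have b0: "b > 0" using a0 ab(3) by simp
  obtain d where d: "d > 0" "d \<le> zs" "\<forall>x y. zs - d < x \<and> x < zs \<and> zs < y \<and> y < zs + d \<longrightarrow> D x * D y < 0"
    using cross_opp[OF zs0 zs(2)] by blast
  have q0: "zs * (b - a) / b > 0" using zs0 ab(3) a0 by auto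
  obtain k where k: "k > 0" "k < d" "k < zs * (b - a) / b" using small2[OF d(1) q0] by blast
  define x where "x = zs - k"
  define y where "y = zs + d / 2"
  have xy: "D x * D y < 0" using d k by (auto simp: x_def y_def)
  have x0: "x > 0" using k d by (simp add: x_def)
  have "k * b < zs * (b - a)" using k(3) b0 by (simp add: pos_less_divide_eq)
  then have "zs * a < x * b" by (simp add: x_def algebra_simps)
  then have xb: "zs < x * b / a" using a0 by (simp add: pos_less_divide_eq)
  define c where "c = x / a"
  have c0: "c > 0" using x0 a0 by (simp add: c_def)
  have ca: "c * a = x" using a0 by (simp add: c_def)
  have cb: "c * b = x * b / a" by (simp add: c_def)
  have cb0: "c * b > 0" using c0 b0 by simp
  have y0: "y > 0" "y > zs" using zs0 d by (auto simp: y_def)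
  have "D y * D (c * b) > 0"
    by (rule same_sign'[OF y0(1) cb0]) (use nzs xb cb y0 in \<open>auto simp: min_def max_def\<close>)
  then have "D (c * a) * D (c * b) < 0" using sign_trans2 xy ca by metis
  then have "links (hsupp f) (Xset f g) (Xset g f)"
    by (rule link_opp[OF ab(1) ab(2) hsupp_sub c0])
  then show False using nlf by blast
qed

lemma comp:
  assumes "x > 0" "D x \<noteq> 0"
  shows "\<exists>p q. 0 < p \<and> p < x \<and> x < q \<and> D p = 0 \<and> D q = 0 \<and> (\<forall>z\<in>{p<..<q}. D z \<noteq> 0)"
proof -
  obtain p where p: "0 \<le> p" "p < x" "\<forall>z\<in>{p<..x}. D z \<noteq> 0" "p > 0 \<longrightarrow> D p = 0"
      "\<forall>z\<in>{0<..<x}. D z = 0 \<longrightarrow> z \<le> p"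
    using comp_left[OF assms] by blast
  obtain z1 where z1: "0 < z1" "z1 < x" "D z1 = 0" using acc0[OF assms(1)] by blast
  have p0: "p > 0" using p(5) z1 by force
  obtain w where w: "w > x" "D w = 0" using accInf by blast
  obtain q where q: "x < q" "q \<le> w" "D q = 0" "\<forall>z\<in>{x..<q}. D z \<noteq> 0"
    using comp_right[OF assms w] by blast
  have "\<forall>z\<in>{p<..<q}. D z \<noteq> 0"
  proof
    fix z assume z: "z \<in> {p<..<q}"
    show "D z \<noteq> 0"
    proof (cases "z \<le> x")
      case True then show ?thesis using p(3) z by auto
    next
      case False then show ?thesis using q(4) z by auto
    qed
  qed
  then show ?thesis using p0 p(2,4) q(1,3) by blast
qed

lemma comp_sign:
  assumes "0 < p" "p < x" "x < q" "\<forall>z\<in>{p<..<q}. D z \<noteq> 0" "z \<in> {p<..<q}"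
  shows "D z * D x > 0"
  by (rule same_sign') (use assms in \<open>auto simp: min_def max_def\<close>)

definition SI where "SI l \<longleftrightarrow> l > 0 \<and> (\<forall>x>0. (D (l * x) < 0 \<longleftrightarrow> D x < 0) \<and> (D (l * x) > 0 \<longleftrightarrow> D x > 0))"

lemma SI_zero: "SI l \<Longrightarrow> x > 0 \<Longrightarrow> D x = 0 \<Longrightarrow> D (l * x) = 0"
proof -
  assume "SI l" "x > 0" "D x = 0"
  then have "\<not> D (l * x) < 0" "\<not> D (l * x) > 0" unfolding SI_def by auto
  then show ?thesis by linarith
qed

lemma noopp:
  assumes nl: "\<not> links S (Xset f g) (Xset g f)" and S: "S \<subseteq> {0<..}" "a \<in> S" "b \<in> S" and y: "y > 0"
  shows "\<not> D y * D (b / a * y) < 0"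
proof
  assume h: "D y * D (b / a * y) < 0"
  have a0: "a > 0" using S by auto
  define c where "c = y / a"
  have c0: "c > 0" using a0 y by (simp add: c_def)
  have "c * a = y" "c * b = b / a * y" using a0 by (auto simp: c_def)
  then have "D (c * a) * D (c * b) < 0" using h by simp
  then have "links S (Xset f g) (Xset g f)" by (rule link_opp[OF S(2,3,1) c0])
  then show False using nl by blast
qed

lemma pres:
  assumes nl: "\<not> links S (Xset f g) (Xset g f)" and S: "S \<subseteq> {0<..}" "a \<in> S" "b \<in> S"
    and x: "x > 0" "D x \<noteq> 0"
  shows "D x * D (b / a * x) > 0"
proof -
  have a0: "a > 0" and b0: "b > 0" using S by auto
  define \<rho> where "\<rho> = b / a"
  have r0: "\<rho> > 0" using a0 b0 by (simp add: \<rho>_def)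
  have rx0: "\<rho> * x > 0" using r0 x by simp
  have ne: "D (\<rho> * x) \<noteq> 0"
  proof
    assume z: "D (\<rho> * x) = 0"
    obtain d where d: "d > 0" "d \<le> \<rho> * x"
      "\<forall>u v. \<rho> * x - d < u \<and> u < \<rho> * x \<and> \<rho> * x < v \<and> v < \<rho> * x + d \<longrightarrow> D u * D v < 0"
      using cross_opp[OF rx0 z] by blast
    have ax: "\<bar>D x\<bar> > 0" using x by simp
    obtain \<delta> where \<delta>: "\<delta> > 0" "\<forall>y. \<bar>y - x\<bar> < \<delta> \<longrightarrow> \<bar>D y - D x\<bar> < \<bar>D x\<bar>"
      using D_eps[OF x(1) ax] by blast
    have dr: "d / \<rho> > 0" using d r0 by simp
    obtain t where t: "t > 0" "t < \<delta>" "t < d / \<rho>" using small2[OF \<delta>(1) dr] by blast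
    have rt: "\<rho> * t < d" using t(3) r0 by (simp add: less_divide_eq mult.commute)
    have tx: "t < x"
    proof -
      have "d / \<rho> \<le> x" using d(2) r0 by (simp add: divide_le_eq mult.commute)
      then show ?thesis using t by simp
    qed
    define x1 where "x1 = x - t"
    define x2 where "x2 = x + t"
    have x1p: "x1 > 0" "x2 > 0" using tx t x by (auto simp: x1_def x2_def)
    have "\<rho> * x1 = \<rho> * x - \<rho> * t" "\<rho> * x2 = \<rho> * x + \<rho> * t" by (simp_all add: x1_def x2_def algebra_simps)
    then have PQ: "D (\<rho> * x1) * D (\<rho> * x2) < 0" using d(3) rt t(1) r0 by (simp add: mult_pos_pos)
    have s1: "D x1 * D x > 0"
    proof -
      have "\<bar>D x1 - D x\<bar> < \<bar>D x\<bar>" using \<delta>(2) t by (simp add: x1_def)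
      then show ?thesis by (auto simp: zero_less_mult_iff abs_if split: if_splits)
    qed
    have s2: "D x2 * D x > 0"
    proof -
      have "\<bar>D x2 - D x\<bar> < \<bar>D x\<bar>" using \<delta>(2) t by (simp add: x2_def)
      then show ?thesis by (auto simp: zero_less_mult_iff abs_if split: if_splits)
    qed
    have "D x1 * D (\<rho> * x1) < 0 \<or> D x2 * D (\<rho> * x2) < 0" by (rule sign_pick[OF s1 s2 PQ])
    then show False using noopp[OF nl S] x1p unfolding \<rho>_def by blast
  qed
  have "\<not> D x * D (\<rho> * x) < 0" using noopp[OF nl S x(1)] by (simp add: \<rho>_def)
  moreover have "D x * D (\<rho> * x) \<noteq> 0" using ne x(2) by simp
  ultimately show ?thesis unfolding \<rho>_def by linarith
qed

lemma SI_pair: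
  assumes nl: "\<not> links S (Xset f g) (Xset g f)" and S: "S \<subseteq> {0<..}" "a \<in> S" "b \<in> S"
  shows "SI (b / a)"
  unfolding SI_def
proof (intro conjI allI impI)
  have a0: "a > 0" and b0: "b > 0" using S by auto
  then show "b / a > 0" by simp
  fix x :: real assume x: "x > 0"
  have "(D (b / a * x) < 0 \<longleftrightarrow> D x < 0) \<and> (D (b / a * x) > 0 \<longleftrightarrow> D x > 0)"
  proof (cases "D x = 0")
    case False
    then have "D x * D (b / a * x) > 0" by (rule pres[OF nl S x])
    then show ?thesis by (auto simp: zero_less_mult_iff)
  next
    case True
    have "D (b / a * x) = 0"
    proof (rule ccontr)
      assume ne: "D (b / a * x) \<noteq> 0"
      have bx: "b / a * x > 0" using a0 b0 x by simp
      have "D (b / a * x) * D (a / b * (b / a * x)) > 0" by (rule pres[OF nl S(1,3,2) bx ne])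
      moreover have "a / b * (b / a * x) = x" using a0 b0 by simp
      ultimately show False using True by simp
    qed
    then show ?thesis using True by simp
  qed
  then show "D (b / a * x) < 0 \<longleftrightarrow> D x < 0" "D (b / a * x) > 0 \<longleftrightarrow> D x > 0" by blast+
qed

lemma SI_mult: "SI l \<Longrightarrow> SI k \<Longrightarrow> SI (l * k)"
  unfolding SI_def
proof (intro conjI allI impI, goal_cases)
  case 1 then show ?case by simp
next
  case (2 x)
  then have "k * x > 0" by simp
  then show ?case using 2 by (simp add: mult.assoc)
next
  case (3 x)
  then have "k * x > 0" by simp
  then show ?case using 3 by (simp add: mult.assoc)
qed

lemma SI_inv: "SI l \<Longrightarrow> SI (1 / l)"
  unfolding SI_def
proof (intro conjI allI impI, goal_cases)
  case 1 then show ?case by simp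
next
  case (2 x)
  then have "x / l > 0" by simp
  then have "D (l * (x / l)) < 0 \<longleftrightarrow> D (x / l) < 0" using 2 by blast
  then show ?case using 2 by simp
next
  case (3 x)
  then have "x / l > 0" by simp
  then have "D (l * (x / l)) > 0 \<longleftrightarrow> D (x / l) > 0" using 3 by blast
  then show ?case using 3 by simp
qed

lemma SI_one: "SI 1" unfolding SI_def by simp

lemma SI_pow: "SI l \<Longrightarrow> SI (l ^ n)"
  by (induction n) (auto simp: SI_one intro: SI_mult)


lemma SI_lt: "SI l \<Longrightarrow> x > 0 \<Longrightarrow> D x < 0 \<Longrightarrow> D (l * x) < 0"
  unfolding SI_def by blast

lemma SI_gt: "SI l \<Longrightarrow> x > 0 \<Longrightarrow> D x > 0 \<Longrightarrow> D (l * x) > 0"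
  unfolding SI_def by blast

lemma SI_neg_int:
  assumes "SI l" "0 \<le> a" "\<forall>z\<in>{a<..<b}. D z < 0"
  shows "\<forall>z\<in>{l * a<..<l * b}. D z < 0"
proof
  fix z assume z: "z \<in> {l * a<..<l * b}"
  have l0: "l > 0" using assms(1) by (simp add: SI_def)
  have "z / l \<in> {a<..<b}" using z l0 by (auto simp: field_simps)
  then have "D (z / l) < 0" using assms(3) by blast
  moreover have "z / l > 0" using \<open>z / l \<in> {a<..<b}\<close> assms(2) by auto
  ultimately have "D (l * (z / l)) < 0" using SI_lt[OF assms(1)] by blast
  then show "D z < 0" using l0 by simp
qed

lemma SI_pos_int:
  assumes "SI l" "0 \<le> a" "\<forall>z\<in>{a<..<b}. D z > 0"
  shows "\<forall>z\<in>{l * a<..<l * b}. D z > 0"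
proof
  fix z assume z: "z \<in> {l * a<..<l * b}"
  have l0: "l > 0" using assms(1) by (simp add: SI_def)
  have "z / l \<in> {a<..<b}" using z l0 by (auto simp: field_simps)
  then have "D (z / l) > 0" using assms(3) by blast
  moreover have "z / l > 0" using \<open>z / l \<in> {a<..<b}\<close> assms(2) by auto
  ultimately have "D (l * (z / l)) > 0" using SI_gt[OF assms(1)] by blast
  then show "D z > 0" using l0 by simp
qed

lemma SI_zero_rev: "SI k \<Longrightarrow> z > 0 \<Longrightarrow> D (k * z) = 0 \<Longrightarrow> D z = 0"
proof -
  assume a: "SI k" "z > 0" "D (k * z) = 0"
  then have "(D (k * z) < 0 \<longleftrightarrow> D z < 0) \<and> (D (k * z) > 0 \<longleftrightarrow> D z > 0)"
    unfolding SI_def by blast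
  then show "D z = 0" using a(3) by linarith
qed

lemma kappa:
  assumes "SI k" "0 < p" "p < u" "u < q" "p < k * u" "k * u < q" "D p = 0" "D q = 0"
    "\<forall>z\<in>{p<..<q}. D z \<noteq> 0"
  shows "k = 1"
proof (rule ccontr)
  assume k1: "k \<noteq> 1"
  have k0: "k > 0" using assms(1) unfolding SI_def by blast
  show False
  proof (cases "k > 1")
    case True
    define z where "z = q / k"
    have kz: "k * z = q" using k0 unfolding z_def by simp
    have "k * u < k * z" using assms(6) kz by simp
    then have uz: "u < z" using k0 by simp
    have z0: "z > 0" using uz assms(2,3) by linarith
    have "1 * z < k * z" by (rule mult_strict_right_mono[OF True z0])
    then have zq: "z < q" using kz by simp
    have zin: "z \<in> {p<..<q}" using uz zq assms(3) by auto
    have "D z = 0" by (rule SI_zero_rev[OF assms(1) z0]) (use kz assms(8) in simp)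
    then show False using assms(9) zin by blast
  next
    case False
    then have kl: "k < 1" using k1 by simp
    define z where "z = p / k"
    have kz: "k * z = p" using k0 unfolding z_def by simp
    have "k * z < k * u" using assms(5) kz by simp
    then have zu: "z < u" using k0 by simp
    have z0: "z > 0" using kz k0 assms(2) by (metis zero_less_mult_pos)
    have "k * z < 1 * z" by (rule mult_strict_right_mono[OF kl z0])
    then have pz: "p < z" using kz by simp
    have zin: "z \<in> {p<..<q}" using zu pz assms(4) by auto
    have "D z = 0" by (rule SI_zero_rev[OF assms(1) z0]) (use kz assms(7) in simp)
    then show False using assms(9) zin by blast
  qed
qed

lemma uniq:
  assumes nl: "\<not> links S (Xset f g) (Xset g f)" and S: "S \<subseteq> {0<..}" "a \<in> S" "b \<in> S"
    and "a \<in> {p<..<q}" "b \<in> {p<..<q}" "0 < p" "D p = 0" "D q = 0" "\<forall>z\<in>{p<..<q}. D z \<noteq> 0"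
  shows "a = b"
proof -
  have a0: "a > 0" using S by auto
  have "a \<in> {p<..<q}" "b \<in> {p<..<q}" using assms(5,6) by auto
  moreover have "b / a * a = b" using a0 by simp
  ultimately have k1: "p < a" "a < q" "p < b / a * a" "b / a * a < q" by auto
  have "b / a = 1"
    by (rule kappa[OF SI_pair[OF nl S] assms(7) k1 assms(8,9,10)])
  then show ?thesis using a0 by simp
qed

lemma inv_f:
  assumes "SI l" "s \<in> hsupp f"
  shows "l * s \<in> hsupp f"
proof -
  have l0: "l > 0" using assms(1) by (simp add: SI_def)
  have s0: "s > 0" using hsupp_pos[OF assms(2)] .
  have x0: "l * s > 0" using l0 s0 by simp
  have Dx: "D (l * s) < 0" using SI_lt[OF assms(1) s0 Sf_neg[OF assms(2)]] .
  obtain p q where pq: "0 < p" "p < l * s" "l * s < q" "D p = 0" "D q = 0" "\<forall>z\<in>{p<..<q}. D z \<noteq> 0"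
    using comp[OF x0] Dx by force
  have neg: "\<forall>z\<in>{p<..<q}. D z < 0"
  proof
    fix z assume z: "z \<in> {p<..<q}"
    have "D z * D (l * s) > 0" by (rule comp_sign[OF pq(1,2,3,6) z])
    then show "D z < 0" using Dx by (simp add: zero_less_mult_iff)
  qed
  obtain y where y: "y \<in> hsupp f" "p < y" "y < q"
    using L1[OF _ pq(2) pq(3) pq(5) neg eps_right[OF pq(1) pq(4) pq(2)]] pq(1) by auto
  have SIy: "SI (y / s)" by (rule SI_pair[OF nlf hsupp_sub assms(2) y(1)])
  have SIk: "SI (y / s * (1 / l))" by (rule SI_mult[OF SIy SI_inv[OF assms(1)]])
  have ku: "y / s * (1 / l) * (l * s) = y" using l0 s0 by simp
  have k1: "p < y / s * (1 / l) * (l * s)" "y / s * (1 / l) * (l * s) < q" unfolding ku using y by auto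
  have "y / s * (1 / l) = 1"
    by (rule kappa[OF SIk pq(1,2,3) k1 pq(4,5,6)])
  then have "y = l * s" using l0 s0 by (simp add: field_simps)
  then show ?thesis using y(1) by simp
qed

lemma inv_g:
  assumes "SI l" "s \<in> hsupp g"
  shows "l * s \<in> hsupp g"
proof -
  have l0: "l > 0" using assms(1) by (simp add: SI_def)
  have s0: "s > 0" using hsupp_pos[OF assms(2)] .
  have x0: "l * s > 0" using l0 s0 by simp
  have Dx: "D (l * s) > 0" using SI_gt[OF assms(1) s0 Sg_pos[OF assms(2)]] .
  obtain p q where pq: "0 < p" "p < l * s" "l * s < q" "D p = 0" "D q = 0" "\<forall>z\<in>{p<..<q}. D z \<noteq> 0"
    using comp[OF x0] Dx by force
  have pos: "\<forall>z\<in>{p<..<q}. sw.D z < 0"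
  proof
    fix z assume z: "z \<in> {p<..<q}"
    have "D z * D (l * s) > 0" by (rule comp_sign[OF pq(1,2,3,6) z])
    then show "sw.D z < 0" using Dx by (simp add: zero_less_mult_iff swD)
  qed
  have swq: "sw.D q = 0" using pq(5) by (simp add: swD)
  have eps: "\<forall>e>0. \<exists>u\<in>{p<..<l * s}. \<bar>sw.D u\<bar> < e"
    using eps_right[OF pq(1) pq(4) pq(2)] by (simp add: swD)
  obtain y where y: "y \<in> hsupp g" "p < y" "y < q"
    using sw.L1[OF _ pq(2) pq(3) swq pos eps] pq(1) by auto
  have SIy: "SI (y / s)" by (rule SI_pair[OF nlg hsupp_sub assms(2) y(1)])
  have SIk: "SI (y / s * (1 / l))" by (rule SI_mult[OF SIy SI_inv[OF assms(1)]])
  have ku: "y / s * (1 / l) * (l * s) = y" using l0 s0 by simp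
  have k1: "p < y / s * (1 / l) * (l * s)" "y / s * (1 / l) * (l * s) < q" unfolding ku using y by auto
  have "y / s * (1 / l) = 1"
    by (rule kappa[OF SIk pq(1,2,3) k1 pq(4,5,6)])
  then have "y = l * s" using l0 s0 by (simp add: field_simps)
  then show ?thesis using y(1) by simp
qed

end


lemma aff_alg:
  fixes m c a b z Da Db :: real
  assumes "Db = m * b + c" "Da = m * a + c" "m * z + c = 0"
  shows "Db * (a - z) = Da * (b - z)"
proof -
  have c: "c = - (m * z)" using assms(3) by linarith
  show ?thesis unfolding assms(1,2) c by (simp add: algebra_simps)
qed

context hs2
begin

lemma aff_pair:
  assumes "0 < a" "a < b" "{a<..<b} \<inter> hsupp f = {}" "{a<..<b} \<inter> hsupp g = {}"
  shows "\<exists>m c. \<forall>x\<in>{a..b}. D x = m * x + c"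
proof -
  have cn: "connected {a<..<b}" by (rule convex_connected) simp
  have sb: "{a<..<b} \<subseteq> {0<..}" using assms(1) by auto
  obtain a1 b1 where f1: "\<forall>x\<in>{a<..<b}. f x = a1 * x + b1"
    using aff_connected[OF cn open_greaterThanLessThan sb assms(3)] by blast
  obtain a2 b2 where g1: "\<forall>x\<in>{a<..<b}. g x = a2 * x + b2"
    using aff_connected[OF cn open_greaterThanLessThan sb assms(4)] by blast
  have Di: "\<forall>x\<in>{a<..<b}. D x = (a1 - a2) * x + (b1 - b2)"
    using f1 g1 by (simp add: D_def algebra_simps)
  have e: "D a = (a1 - a2) * a + (b1 - b2)" "D b = (a1 - a2) * b + (b1 - b2)"
    using aff_ends[OF assms(1,2) Di] by auto
  have "\<forall>x\<in>{a..b}. D x = (a1 - a2) * x + (b1 - b2)"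
  proof
    fix x assume x: "x \<in> {a..b}"
    show "D x = (a1 - a2) * x + (b1 - b2)"
    proof (cases "x = a")
      case True then show ?thesis using e by simp
    next
      case False
      show ?thesis
      proof (cases "x = b")
        case True then show ?thesis using e by simp
      next
        case False
        then have "x \<in> {a<..<b}" using x \<open>x \<noteq> a\<close> by auto
        then show ?thesis using Di by blast
      qed
    qed
  qed
  then show ?thesis by blast
qed

end

context hs2A
begin

lemma key:
  assumes o: "0 < p" "p < s" "s < \<beta>" "\<beta> < t" "t < \<gamma>" "\<gamma> < s2" "s2 < q"
    and z: "D p = 0" "D \<beta> = 0" "D \<gamma> = 0" "D q = 0"
    and sg: "\<forall>z\<in>{p<..<\<beta>}. D z < 0" "\<forall>z\<in>{\<beta><..<\<gamma>}. D z > 0" "\<forall>z\<in>{\<gamma><..<q}. D z < 0"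
    and m: "s \<in> hsupp f" "s2 \<in> hsupp f" "t \<in> hsupp g"
  shows "D t * (s - \<beta>) = D s * (t - \<beta>)" "D s2 * (t - \<gamma>) = D t * (s2 - \<gamma>)"
proof -
  have nz1: "\<forall>z\<in>{p<..<\<beta>}. D z \<noteq> 0" using sg(1) by (metis less_irrefl)
  have nz2: "\<forall>z\<in>{\<beta><..<\<gamma>}. D z \<noteq> 0" using sg(2) by (metis less_irrefl)
  have nz3: "\<forall>z\<in>{\<gamma><..<q}. D z \<noteq> 0" using sg(3) by (metis less_irrefl)
  have b0: "\<beta> > 0" "\<gamma> > 0" using o by linarith+
  have noF: "\<forall>x\<in>{s<..<s2}. x \<notin> hsupp f"
  proof (intro ballI notI)
    fix x assume x: "x \<in> {s<..<s2}" "x \<in> hsupp f"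
    have Dx: "D x < 0" by (rule Sf_neg[OF x(2)])
    have "x < \<beta> \<or> x = \<beta> \<or> (\<beta> < x \<and> x < \<gamma>) \<or> x = \<gamma> \<or> \<gamma> < x" by linarith
    then show False
    proof (elim disjE)
      assume "x < \<beta>"
      then have xi: "x \<in> {p<..<\<beta>}" and si: "s \<in> {p<..<\<beta>}" using x(1) o by auto
      have "s = x" by (rule uniq[OF nlf hsupp_sub m(1) x(2) si xi o(1) z(1) z(2) nz1])
      then show False using x(1) by simp
    next
      assume "x = \<beta>" then show False using Dx z(2) by simp
    next
      assume "\<beta> < x \<and> x < \<gamma>" then show False using Dx sg(2) by force
    next
      assume "x = \<gamma>" then show False using Dx z(3) by simp
    next
      assume "\<gamma> < x"
      then have xi: "x \<in> {\<gamma><..<q}" and si: "s2 \<in> {\<gamma><..<q}" using x(1) o by auto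
      have "s2 = x" by (rule uniq[OF nlf hsupp_sub m(2) x(2) si xi b0(2) z(3) z(4) nz3])
      then show False using x(1) by simp
    qed
  qed
  have noG1: "\<forall>x\<in>{s<..<t}. x \<notin> hsupp g"
  proof (intro ballI notI)
    fix x assume x: "x \<in> {s<..<t}" "x \<in> hsupp g"
    have Dx: "D x > 0" by (rule Sg_pos[OF x(2)])
    have "x < \<beta> \<or> x = \<beta> \<or> \<beta> < x" by linarith
    then show False
    proof (elim disjE)
      assume "x < \<beta>" then have "x \<in> {p<..<\<beta>}" using x(1) o by auto
      then show False using Dx sg(1) by force
    next
      assume "x = \<beta>" then show False using Dx z(2) by simp
    next
      assume "\<beta> < x"
      then have xi: "x \<in> {\<beta><..<\<gamma>}" and ti: "t \<in> {\<beta><..<\<gamma>}" using x(1) o by auto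
      have "t = x" by (rule uniq[OF nlg hsupp_sub m(3) x(2) ti xi b0(1) z(2) z(3) nz2])
      then show False using x(1) by simp
    qed
  qed
  have noG2: "\<forall>x\<in>{t<..<s2}. x \<notin> hsupp g"
  proof (intro ballI notI)
    fix x assume x: "x \<in> {t<..<s2}" "x \<in> hsupp g"
    have Dx: "D x > 0" by (rule Sg_pos[OF x(2)])
    have "x < \<gamma> \<or> x = \<gamma> \<or> \<gamma> < x" by linarith
    then show False
    proof (elim disjE)
      assume "x < \<gamma>"
      then have xi: "x \<in> {\<beta><..<\<gamma>}" and ti: "t \<in> {\<beta><..<\<gamma>}" using x(1) o by auto
      have "t = x" by (rule uniq[OF nlg hsupp_sub m(3) x(2) ti xi b0(1) z(2) z(3) nz2])
      then show False using x(1) by simp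
    next
      assume "x = \<gamma>" then show False using Dx z(3) by simp
    next
      assume "\<gamma> < x" then have "x \<in> {\<gamma><..<q}" using x(1) o by auto
      then show False using Dx sg(3) by force
    qed
  qed
  have s0: "s > 0" "t > 0" using o by linarith+
  have i1: "{s<..<t} \<inter> hsupp f = {}" using noF o by auto
  have i2: "{s<..<t} \<inter> hsupp g = {}" using noG1 by auto
  obtain m1 c1 where a1: "\<forall>x\<in>{s..t}. D x = m1 * x + c1"
    using aff_pair[OF s0(1) _ i1 i2] o by force
  have j1: "{t<..<s2} \<inter> hsupp f = {}" using noF o by auto
  have j2: "{t<..<s2} \<inter> hsupp g = {}" using noG2 by auto
  obtain m2 c2 where a2: "\<forall>x\<in>{t..s2}. D x = m2 * x + c2"
    using aff_pair[OF s0(2) _ j1 j2] o by force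
  have "D t = m1 * t + c1" "D s = m1 * s + c1" "m1 * \<beta> + c1 = 0" using a1 o z(2) by auto
  then show "D t * (s - \<beta>) = D s * (t - \<beta>)" by (rule aff_alg)
  have "D s2 = m2 * s2 + c2" "D t = m2 * t + c2" "m2 * \<gamma> + c2 = 0" using a2 o z(3) by auto
  then show "D s2 * (t - \<gamma>) = D t * (s2 - \<gamma>)" by (rule aff_alg)
qed

end


context hs2A
begin

lemma next_comp:
  assumes "0 < p" "p < \<beta>" "D \<beta> = 0" "\<forall>z\<in>{p<..<\<beta>}. D z \<noteq> 0"
  shows "\<exists>y q. \<beta> < y \<and> y < q \<and> D q = 0 \<and> (\<forall>z\<in>{\<beta><..<q}. D z \<noteq> 0)
     \<and> (\<forall>z\<in>{\<beta><..<q}. D z * D y > 0) \<and> (\<forall>x\<in>{p<..<\<beta>}. D x * D y < 0)"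
proof -
  have b0: "\<beta> > 0" using assms by linarith
  obtain d where d: "d > 0" "d \<le> \<beta>" "\<forall>x y. \<beta> - d < x \<and> x < \<beta> \<and> \<beta> < y \<and> y < \<beta> + d \<longrightarrow> D x * D y < 0"
    using cross_opp[OF b0 assms(3)] by blast
  have bp: "\<beta> - p > 0" using assms by simp
  obtain k where k: "k > 0" "k < d" "k < \<beta> - p" using small2[OF d(1) bp] by blast
  define x1 where "x1 = \<beta> - k"
  define y1 where "y1 = \<beta> + k"
  have x1i: "x1 \<in> {p<..<\<beta>}" using k by (auto simp: x1_def)
  have xy1: "D x1 * D y1 < 0" using d(3) k by (auto simp: x1_def y1_def)
  have y0: "y1 > 0" "D y1 \<noteq> 0" using b0 k xy1 by (auto simp: y1_def)
  obtain p1 q where pq: "0 < p1" "p1 < y1" "y1 < q" "D p1 = 0" "D q = 0" "\<forall>z\<in>{p1<..<q}. D z \<noteq> 0"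
    using comp[OF y0] by blast
  have by1: "\<beta> < y1" using k by (simp add: y1_def)
  have "p1 = \<beta>"
  proof (rule ccontr)
    assume ne: "p1 \<noteq> \<beta>"
    show False
    proof (cases "p1 < \<beta>")
      case True
      then have "\<beta> \<in> {p1<..<q}" using by1 pq(3) by auto
      then show False using pq(6) assms(3) by blast
    next
      case False
      then have "\<beta> < p1" using ne by simp
      then have "D x1 * D p1 < 0" using d(3) k pq(2) by (auto simp: x1_def y1_def)
      then show False using pq(4) by simp
    qed
  qed
  have side: "\<forall>z\<in>{\<beta><..<q}. D z * D y1 > 0"
  proof
    fix z assume "z \<in> {\<beta><..<q}"
    then show "D z * D y1 > 0" using comp_sign[OF pq(1,2,3,6)] \<open>p1 = \<beta>\<close> by blast
  qed
  have other: "\<forall>x\<in>{p<..<\<beta>}. D x * D y1 < 0"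
  proof
    fix x assume x: "x \<in> {p<..<\<beta>}"
    have "D x * D x1 > 0"
      by (rule same_sign') (use x x1i assms(1,4) in \<open>auto simp: min_def max_def\<close>)
    then show "D x * D y1 < 0" using xy1 by (metis sign_trans mult.commute)
  qed
  show ?thesis using by1 pq(3) pq(5) pq(6) \<open>p1 = \<beta>\<close> side other by blast
qed

lemma final: False
proof -
  obtain s s' where ss: "s \<in> hsupp f" "s' \<in> hsupp f" "s < s'" using two_f by blast
  have s0: "s > 0" using hsupp_pos[OF ss(1)] .
  have Ds: "D s < 0" by (rule Sf_neg[OF ss(1)])
  obtain p \<beta> where pb: "0 < p" "p < s" "s < \<beta>" "D p = 0" "D \<beta> = 0" "\<forall>z\<in>{p<..<\<beta>}. D z \<noteq> 0"
    using comp[OF s0] Ds by force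
  have neg1: "\<forall>z\<in>{p<..<\<beta>}. D z < 0"
  proof
    fix z assume z: "z \<in> {p<..<\<beta>}"
    have "D z * D s > 0" by (rule comp_sign[OF pb(1,2,3,6) z])
    then show "D z < 0" using Ds by (simp add: zero_less_mult_iff)
  qed
  obtain y1 \<gamma> where c2: "\<beta> < y1" "y1 < \<gamma>" "D \<gamma> = 0" "\<forall>z\<in>{\<beta><..<\<gamma>}. D z \<noteq> 0"
      "\<forall>z\<in>{\<beta><..<\<gamma>}. D z * D y1 > 0" "\<forall>x\<in>{p<..<\<beta>}. D x * D y1 < 0"
    using next_comp[OF pb(1) _ pb(5,6)] pb(2,3) by auto
  have Dy1: "D y1 > 0"
  proof -
    have "s \<in> {p<..<\<beta>}" using pb by auto
    then have "D s * D y1 < 0" using c2(6) by blast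
    then show ?thesis using Ds by (simp add: mult_less_0_iff)
  qed
  have pos2: "\<forall>z\<in>{\<beta><..<\<gamma>}. D z > 0"
  proof
    fix z assume "z \<in> {\<beta><..<\<gamma>}"
    then have "D z * D y1 > 0" using c2(5) by blast
    then show "D z > 0" using Dy1 by (simp add: zero_less_mult_iff)
  qed
  have b0: "\<beta> > 0" using pb by linarith
  obtain y2 q where c3: "\<gamma> < y2" "y2 < q" "D q = 0" "\<forall>z\<in>{\<gamma><..<q}. D z \<noteq> 0"
      "\<forall>z\<in>{\<gamma><..<q}. D z * D y2 > 0" "\<forall>x\<in>{\<beta><..<\<gamma>}. D x * D y2 < 0"
    using next_comp[OF b0 _ c2(3,4)] c2(1,2) by auto
  have Dy2: "D y2 < 0"
  proof -
    have "y1 \<in> {\<beta><..<\<gamma>}" using c2 by auto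
    then have "D y1 * D y2 < 0" using c3(6) by blast
    then show ?thesis using Dy1 by (simp add: mult_less_0_iff)
  qed
  have neg3: "\<forall>z\<in>{\<gamma><..<q}. D z < 0"
  proof
    fix z assume "z \<in> {\<gamma><..<q}"
    then have "D z * D y2 > 0" using c3(5) by blast
    then show "D z < 0" using Dy2 by (simp add: zero_less_mult_iff)
  qed
  have g0: "\<gamma> > 0" using b0 c2 by linarith
  have swg: "sw.D \<gamma> = 0" using c2(3) by (simp add: swD)
  have swpos: "\<forall>z\<in>{\<beta><..<\<gamma>}. sw.D z < 0" using pos2 by (simp add: swD)
  have sweps: "\<forall>e>0. \<exists>u\<in>{\<beta><..<y1}. \<bar>sw.D u\<bar> < e"
    using eps_right[OF b0 pb(5) c2(1)] by (simp add: swD)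
  obtain t where t: "t \<in> hsupp g" "\<beta> < t" "t < \<gamma>"
    using sw.L1[OF _ c2(1) c2(2) swg swpos sweps] b0 by auto
  obtain s2 where s2: "s2 \<in> hsupp f" "\<gamma> < s2" "s2 < q"
    using L1[OF _ c3(1) c3(2) c3(3) neg3 eps_right[OF g0 c2(3) c3(1)]] g0 by auto
  define r where "r = s2 / s"
  have SIr: "SI r" unfolding r_def by (rule SI_pair[OF nlf hsupp_sub ss(1) s2(1)])
  have r1: "r > 1" using s0 s2 c2 pb t unfolding r_def by (simp add: less_divide_eq)
  have s2r: "s2 = r * s" using s0 by (simp add: r_def)
  define A where "A = ((t - \<beta>) / (s - \<beta>)) * ((s2 - \<gamma>) / (t - \<gamma>))"
  have A0: "A > 0"
  proof -
    have "(t - \<beta>) / (s - \<beta>) < 0" using t pb by (intro divide_pos_neg) auto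
    moreover have "(s2 - \<gamma>) / (t - \<gamma>) < 0" using t s2 by (intro divide_pos_neg) auto
    ultimately show ?thesis unfolding A_def by (rule mult_neg_neg)
  qed
  have main: "D (l * s2) = A * D (l * s)" if SIl: "SI l" for l
  proof -
    have l0: "l > 0" using SIl by (simp add: SI_def)
    have o: "0 < l * p" "l * p < l * s" "l * s < l * \<beta>" "l * \<beta> < l * t" "l * t < l * \<gamma>"
      "l * \<gamma> < l * s2" "l * s2 < l * q"
      using l0 pb t s2 c2 c3 by auto
    have zz: "D (l * p) = 0" "D (l * \<beta>) = 0" "D (l * \<gamma>) = 0" "D (l * q) = 0"
      using SI_zero[OF SIl] pb b0 g0 c2 c3 t s2 by auto
    have sg: "\<forall>z\<in>{l * p<..<l * \<beta>}. D z < 0" "\<forall>z\<in>{l * \<beta><..<l * \<gamma>}. D z > 0"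
        "\<forall>z\<in>{l * \<gamma><..<l * q}. D z < 0"
      using SI_neg_int[OF SIl _ neg1] SI_pos_int[OF SIl _ pos2] SI_neg_int[OF SIl _ neg3] pb b0 g0 by auto
    have mm: "l * s \<in> hsupp f" "l * s2 \<in> hsupp f" "l * t \<in> hsupp g"
      using inv_f[OF SIl ss(1)] inv_f[OF SIl s2(1)] inv_g[OF SIl t(1)] by auto
    have E1: "D (l * t) * (l * s - l * \<beta>) = D (l * s) * (l * t - l * \<beta>)"
      and E2: "D (l * s2) * (l * t - l * \<gamma>) = D (l * t) * (l * s2 - l * \<gamma>)"
      using key[OF o zz sg mm] by auto
    have "D (l * t) * (s - \<beta>) * l = D (l * s) * (t - \<beta>) * l" using E1 by (simp add: algebra_simps)
    then have "D (l * t) * (s - \<beta>) = D (l * s) * (t - \<beta>)" using l0 by simp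
    then have F1: "D (l * t) = D (l * s) * ((t - \<beta>) / (s - \<beta>))" using pb by (simp add: field_simps)
    have "D (l * s2) * (t - \<gamma>) * l = D (l * t) * (s2 - \<gamma>) * l" using E2 by (simp add: algebra_simps)
    then have "D (l * s2) * (t - \<gamma>) = D (l * t) * (s2 - \<gamma>)" using l0 by simp
    then have F2: "D (l * s2) = D (l * t) * ((s2 - \<gamma>) / (t - \<gamma>))" using t by (simp add: field_simps)
    show ?thesis unfolding F2 F1 A_def by (simp only: ac_simps)
  qed
  have pw: "D (r ^ n * s) = A ^ n * D s" for n
  proof (induction n)
    case 0 then show ?case by simp
  next
    case (Suc n)
    have "D (r ^ n * s2) = A * D (r ^ n * s)" by (rule main[OF SI_pow[OF SIr]])
    moreover have "r ^ n * s2 = r ^ Suc n * s" using s2r by simp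
    ultimately show ?case using Suc by simp
  qed
  have SIr': "SI (1 / r)" by (rule SI_inv[OF SIr])
  have ipw: "D ((1 / r) ^ n * s) * A ^ n = D s" for n
  proof (induction n)
    case 0 then show ?case by simp
  next
    case (Suc n)
    have "D ((1 / r) ^ Suc n * s2) = A * D ((1 / r) ^ Suc n * s)" by (rule main[OF SI_pow[OF SIr']])
    moreover have "(1 / r) ^ Suc n * s2 = (1 / r) ^ n * s" using s2r r1 by simp
    ultimately have "D ((1 / r) ^ n * s) = A * D ((1 / r) ^ Suc n * s)" by simp
    then show ?case using Suc by (simp add: algebra_simps)
  qed
  have aDs: "\<bar>D s\<bar> > 0" using Ds by simp
  have bnd1: "A ^ n * \<bar>D s\<bar> \<le> 1" for n
  proof -
    have "r ^ n * s > 0" using r1 s0 by simp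
    then have "\<bar>D (r ^ n * s)\<bar> \<le> 1" by (rule D_abs(2))
    then show ?thesis unfolding pw using A0 by (simp add: abs_mult)
  qed
  have bnd2: "\<bar>D s\<bar> * r ^ n \<le> s * A ^ n" for n
  proof -
    have p0: "(1 / r) ^ n * s > 0" using r1 s0 by simp
    have "\<bar>D ((1 / r) ^ n * s)\<bar> \<le> (1 / r) ^ n * s" by (rule D_abs(1)[OF p0])
    then have "\<bar>D ((1 / r) ^ n * s)\<bar> * A ^ n \<le> (1 / r) ^ n * s * A ^ n"
      using A0 by (intro mult_right_mono) auto
    moreover have "\<bar>D ((1 / r) ^ n * s)\<bar> * A ^ n = \<bar>D s\<bar>"
      using ipw[of n] A0 by (metis abs_mult abs_of_pos zero_less_power)
    ultimately have "\<bar>D s\<bar> \<le> (1 / r) ^ n * s * A ^ n" by simp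
    then have "\<bar>D s\<bar> * r ^ n \<le> (1 / r) ^ n * s * A ^ n * r ^ n"
      using r1 by (intro mult_right_mono) auto
    also have "\<dots> = s * A ^ n" using r1 by (simp add: power_one_over field_simps)
    finally show ?thesis .
  qed
  show False
  proof (cases "A > 1")
    case True
    obtain n where "1 / \<bar>D s\<bar> < A ^ n" using real_arch_pow[OF True] by blast
    then have "1 < A ^ n * \<bar>D s\<bar>" using aDs by (simp add: divide_less_eq)
    then show False using bnd1[of n] by simp
  next
    case False
    have rA: "r / A > 1" using False A0 r1 by (simp add: less_divide_eq)
    obtain n where n: "s / \<bar>D s\<bar> < (r / A) ^ n" using real_arch_pow[OF rA] by blast
    have An: "A ^ n > 0" using A0 by simp
    have "s < (r / A) ^ n * \<bar>D s\<bar>" using n aDs by (simp add: divide_less_eq)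
    then have "s * A ^ n < (r / A) ^ n * A ^ n * \<bar>D s\<bar>" using An
      by (metis mult.assoc mult.commute mult_strict_left_mono)
    also have "(r / A) ^ n * A ^ n = r ^ n" using A0 by (simp add: power_divide)
    finally have "s * A ^ n < r ^ n * \<bar>D s\<bar>" .
    then show False using bnd2[of n] by (simp add: mult.commute)
  qed
qed

end


context hs2
begin

lemma comp_two_sided:
  assumes "y > 0" "D y \<noteq> 0" "w > y" "D w = 0"
  shows "\<exists>p q. 0 \<le> p \<and> p < y \<and> y < q \<and> D q = 0 \<and> (\<forall>z\<in>{p<..<q}. D z * D y > 0)
     \<and> (\<forall>e>0. \<exists>u\<in>{p<..<y}. \<bar>D u\<bar> < e)"
proof -
  obtain p where p: "0 \<le> p" "p < y" "\<forall>z\<in>{p<..y}. D z \<noteq> 0" "\<forall>e>0. \<exists>u\<in>{p<..<y}. \<bar>D u\<bar> < e"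
    using comp_left[OF assms(1,2)] by blast
  obtain q where q: "y < q" "D q = 0" "\<forall>z\<in>{y..<q}. D z \<noteq> 0"
    using comp_right[OF assms] by blast
  have "\<forall>z\<in>{p<..<q}. D z * D y > 0"
  proof
    fix z assume z: "z \<in> {p<..<q}"
    have z0: "z > 0" using z p(1) by auto
    show "D z * D y > 0"
    proof (cases "z \<le> y")
      case True
      have nz: "\<forall>w\<in>{z..y}. D w \<noteq> 0" using p(3) z by auto
      have "D z < 0 \<longleftrightarrow> D y < 0" by (rule sign_const[OF z0 True nz])
      moreover have "D z \<noteq> 0" "D y \<noteq> 0" using nz True by auto
      ultimately show ?thesis by (auto simp: zero_less_mult_iff)
    next
      case False
      have nz: "\<forall>w\<in>{y..z}. D w \<noteq> 0" using q(3) z False by auto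
      have "D y < 0 \<longleftrightarrow> D z < 0" by (rule sign_const[OF assms(1) _ nz]) (use False in simp)
      moreover have "D z \<noteq> 0" "D y \<noteq> 0" using nz False by auto
      ultimately show ?thesis by (auto simp: zero_less_mult_iff)
    qed
  qed
  then show ?thesis using p(1,2,4) q(1,2) by blast
qed

lemma main_ordered:
  assumes nlf: "\<not> links (hsupp f) (Xset f g) (Xset g f)"
    and nlg: "\<not> links (hsupp g) (Xset f g) (Xset g f)"
    and x0: "x0 > 0" "D x0 < 0" and y0: "x0 < y0" "D y0 > 0"
  shows False
proof -
  have y00: "y0 > 0" using x0 y0 by simp
  have xy: "x0 \<le> y0" using y0 by simp
  obtain w where w: "w \<in> {x0..y0}" "D w = 0" using exists_zero[OF x0(1) xy x0(2)] y0(2) by blast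
  have wx: "w > x0" using w x0 by (cases "w = x0") auto
  obtain p q where pq: "0 \<le> p" "p < x0" "x0 < q" "D q = 0" "\<forall>z\<in>{p<..<q}. D z * D x0 > 0"
      "\<forall>e>0. \<exists>u\<in>{p<..<x0}. \<bar>D u\<bar> < e"
    using comp_two_sided[OF x0(1) _ wx w(2)] x0(2) by force
  have neg: "\<forall>z\<in>{p<..<q}. D z < 0"
  proof
    fix z assume "z \<in> {p<..<q}"
    then have "D z * D x0 > 0" using pq(5) by blast
    then show "D z < 0" using x0(2) by (simp add: zero_less_mult_iff)
  qed
  obtain s1 where s1: "s1 \<in> hsupp f" "p < s1" "s1 < q" using L1[OF pq(1,2,3,4) neg pq(6)] by blast
  have s1X: "s1 \<in> Xset f g" using s1 neg pq(1) by (auto simp: X_iff)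
  have sepf: "\<exists>e>0. \<forall>y. y > 0 \<and> D y > 0 \<longrightarrow> e \<le> \<bar>y - s\<bar>" if s: "s \<in> hsupp f" for s
  proof (rule ccontr)
    assume "\<not> ?thesis"
    then have h: "\<forall>e>0. \<exists>y. y > 0 \<and> D y > 0 \<and> \<bar>y - s\<bar> < e" by (auto simp: not_le)
    have cl: "\<forall>e>0. \<exists>y\<in>Xset g f. \<bar>y - s\<bar> < e"
    proof (intro allI impI)
      fix e :: real assume "e > 0"
      then obtain y where "y > 0" "D y > 0" "\<bar>y - s\<bar> < e" using h by blast
      then show "\<exists>y\<in>Xset g f. \<bar>y - s\<bar> < e" by (auto simp: Y_iff)
    qed
    have "links (hsupp f) (Xset f g) (Xset g f)"
      by (rule links_near[OF s1(1) s s1X X_open sw.X_pos hsupp_pos[OF s] _ cl])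
         (use s1X in \<open>simp add: X_iff\<close>)
    then show False using nlf by blast
  qed
  show False
  proof (cases "\<exists>t\<in>hsupp g. D t > 0")
    case True
    then obtain t where t: "t \<in> hsupp g" "D t > 0" by blast
    have tY: "t \<in> Xset g f" using t hsupp_pos[OF t(1)] by (simp add: Y_iff)
    have sepg: "\<exists>e>0. \<forall>x. x > 0 \<and> D x < 0 \<longrightarrow> e \<le> \<bar>x - s\<bar>" if s: "s \<in> hsupp g" for s
    proof (rule ccontr)
      assume "\<not> ?thesis"
      then have h: "\<forall>e>0. \<exists>y. y > 0 \<and> D y < 0 \<and> \<bar>y - s\<bar> < e" by (auto simp: not_le)
      have cl: "\<forall>e>0. \<exists>y\<in>Xset f g. \<bar>y - s\<bar> < e"
      proof (intro allI impI)
        fix e :: real assume "e > 0"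
        then obtain y where "y > 0" "D y < 0" "\<bar>y - s\<bar> < e" using h by blast
        then show "\<exists>y\<in>Xset f g. \<bar>y - s\<bar> < e" by (auto simp: X_iff)
      qed
      have "links (hsupp g) (Xset g f) (Xset f g)"
        by (rule links_near[OF t(1) s tY sw.X_open X_pos hsupp_pos[OF s] _ cl])
           (use hsupp_pos[OF t(1)] in simp)
      then show False using nlg links_sym by blast
    qed
    interpret A: hs2A f g
      by unfold_locales (fact nlf, fact nlg, fact sepf, fact sepg, use x0 in blast, use y00 y0(2) in blast)
    show False by (rule A.final)
  next
    case False
    have up: "D w' > 0" if y: "y > 0" "D y > 0" "y < w'" for y w'
    proof (rule ccontr)
      assume "\<not> D w' > 0"
      then have dw: "D w' < 0 \<or> D w' = 0" by linarith
      have yw: "y \<le> w'" using y(3) by simp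
      obtain z where z: "z \<in> {y..w'}" "D z = 0"
        using exists_zero'[OF y(1) yw y(2) dw] by blast
      have zy: "z > y" using z y by (cases "z = y") auto
      obtain p' q' where pq': "0 \<le> p'" "p' < y" "y < q'" "D q' = 0" "\<forall>z\<in>{p'<..<q'}. D z * D y > 0"
          "\<forall>e>0. \<exists>u\<in>{p'<..<y}. \<bar>D u\<bar> < e"
        using comp_two_sided[OF y(1) _ zy z(2)] y(2) by force
      have swq: "sw.D q' = 0" using pq'(4) by (simp add: swD)
      have swn: "\<forall>z\<in>{p'<..<q'}. sw.D z < 0"
      proof
        fix z assume "z \<in> {p'<..<q'}"
        then have "D z * D y > 0" using pq'(5) by blast
        then show "sw.D z < 0" using y(2) by (simp add: swD zero_less_mult_iff)
      qed
      have swe: "\<forall>e>0. \<exists>u\<in>{p'<..<y}. \<bar>sw.D u\<bar> < e" using pq'(6) by (simp add: swD)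
      obtain t where t: "t \<in> hsupp g" "p' < t" "t < q'"
        using sw.L1[OF pq'(1,2,3) swq swn swe] by blast
      have "D t * D y > 0" using pq'(5) t by auto
      then have "D t > 0" using y(2) by (simp add: zero_less_mult_iff)
      then show False using False t(1) by blast
    qed
    define Ys where "Ys = {y. y > 0 \<and> D y > 0}"
    have y0Y: "y0 \<in> Ys" using y00 y0 by (simp add: Ys_def)
    have lowb: "x0 \<le> y" if "y \<in> Ys" for y
    proof (rule ccontr)
      assume "\<not> x0 \<le> y"
      then have "D x0 > 0" using up[of y x0] that by (simp add: Ys_def)
      then show False using x0 by simp
    qed
    have bdd: "bdd_below Ys" unfolding bdd_below_def using lowb by blast
    define \<gamma> where "\<gamma> = Inf Ys"
    have gx: "x0 \<le> \<gamma>" unfolding \<gamma>_def using y0Y lowb by (intro cInf_greatest) auto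
    have g0: "\<gamma> > 0" using gx x0 by simp
    have ray: "D w' > 0" if wg: "w' > \<gamma>" for w'
    proof -
      obtain y where "y \<in> Ys" "y < w'" using wg cInf_less_iff[of Ys w'] y0Y bdd unfolding \<gamma>_def by auto
      then show ?thesis using up by (auto simp: Ys_def)
    qed
    have noF: "{\<gamma><..} \<inter> hsupp f = {}"
    proof (rule ccontr)
      assume "{\<gamma><..} \<inter> hsupp f \<noteq> {}"
      then obtain s where s: "s \<in> hsupp f" "s > \<gamma>" by auto
      then have Ds: "D s > 0" using ray by blast
      obtain e where e: "e > 0" "\<forall>y. y > 0 \<and> D y > 0 \<longrightarrow> e \<le> \<bar>y - s\<bar>" using sepf[OF s(1)] by blast
      have s0: "s > 0" using s g0 by linarith
      have "e \<le> \<bar>s - s\<bar>" using e(2) Ds s0 by blast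
      then show False using e(1) by simp
    qed
    have noG: "{\<gamma><..} \<inter> hsupp g = {}"
    proof (rule ccontr)
      assume "{\<gamma><..} \<inter> hsupp g \<noteq> {}"
      then obtain s where s: "s \<in> hsupp g" "s > \<gamma>" by auto
      then have "D s > 0" using ray by blast
      then show False using False s(1) by blast
    qed
    have cn: "connected {\<gamma><..}" by (rule convex_connected) simp
    have sb: "{\<gamma><..} \<subseteq> {0<..}" using g0 by auto
    obtain a1 b1 where fa: "\<forall>x\<in>{\<gamma><..}. f x = a1 * x + b1"
      using aff_connected[OF cn open_greaterThan sb noF] by blast
    obtain a2 b2 where ga: "\<forall>x\<in>{\<gamma><..}. g x = a2 * x + b2"
      using aff_connected[OF cn open_greaterThan sb noG] by blast
    have "a1 = 0"
    proof (rule bounded_affine_ray[of \<gamma>])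
      show "\<forall>x>\<gamma>. 0 \<le> a1 * x + b1 \<and> a1 * x + b1 \<le> 1"
        using fa bnd_f g0 by (metis greaterThan_iff order.strict_trans)
    qed (use g0 in simp)
    have "a2 = 0"
    proof (rule bounded_affine_ray[of \<gamma>])
      show "\<forall>x>\<gamma>. 0 \<le> a2 * x + b2 \<and> a2 * x + b2 \<le> 1"
        using ga bnd_g g0 by (metis greaterThan_iff order.strict_trans)
    qed (use g0 in simp)
    have Dc: "\<forall>x\<in>{\<gamma><..<\<gamma> + 1}. D x = 0 * x + (b1 - b2)"
      using fa ga \<open>a1 = 0\<close> \<open>a2 = 0\<close> by (simp add: D_def)
    have "D \<gamma> = 0 * \<gamma> + (b1 - b2)" "D (\<gamma> + 1) = 0 * (\<gamma> + 1) + (b1 - b2)"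
      using aff_ends[OF g0 _ Dc] by auto
    then have Dg: "D \<gamma> > 0" using ray[of "\<gamma> + 1"] by simp
    obtain d where d: "d > 0" "\<forall>y. \<bar>y - \<gamma>\<bar> < d \<longrightarrow> \<bar>D y - D \<gamma>\<bar> < D \<gamma>"
      using D_eps[OF g0 Dg] by blast
    obtain k where k: "k > 0" "k < d" "k < \<gamma>" using small2[OF d(1) g0] by blast
    have "D (\<gamma> - k) > 0" using d(2)[rule_format, of "\<gamma> - k"] k by auto
    then have "\<gamma> - k \<in> Ys" using k by (simp add: Ys_def)
    then have "\<gamma> \<le> \<gamma> - k" unfolding \<gamma>_def using bdd by (rule cInf_lower)
    then show False using k by simp
  qed
qed

end

context hs2
begin

lemma abstract_main:
  assumes "\<exists>x>0. D x < 0" "\<exists>y>0. D y > 0"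
  shows "links (hsupp f) (Xset f g) (Xset g f) \<or> links (hsupp g) (Xset f g) (Xset g f)"
proof (rule ccontr)
  assume "\<not> ?thesis"
  then have nlf: "\<not> links (hsupp f) (Xset f g) (Xset g f)"
    and nlg: "\<not> links (hsupp g) (Xset f g) (Xset g f)" by auto
  obtain x0 where x0: "x0 > 0" "D x0 < 0" using assms(1) by blast
  obtain y0 where y0: "y0 > 0" "D y0 > 0" using assms(2) by blast
  show False
  proof (cases "x0 < y0")
    case True
    show False by (rule main_ordered[OF nlf nlg x0 True y0(2)])
  next
    case False
    then have yx: "y0 < x0" using x0 y0 by (cases "x0 = y0") auto
    have n1: "\<not> links (hsupp g) (Xset g f) (Xset f g)" using nlg links_sym by blast
    have n2: "\<not> links (hsupp f) (Xset g f) (Xset f g)" using nlf links_sym by blast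
    have a1: "sw.D y0 < 0" "sw.D x0 > 0" using y0 x0 by (auto simp: swD)
    show False by (rule sw.main_ordered[OF n1 n2 y0(1) a1(1) yx a1(2)])
  qed
qed

end


definition phi :: "real \<Rightarrow> real \<Rightarrow> real" where
  "phi x z = max 0 (1 - x * exp (- z))"

lemma phi_convex:
  assumes "u \<ge> 0" "v \<ge> 0" "u + v = 1"
  shows "phi (u * x + v * y) z \<le> u * phi x z + v * phi y z"
proof -
  have e: "1 - (u * x + v * y) * exp (- z) = u * (1 - x * exp (- z)) + v * (1 - y * exp (- z))"
    using assms(3) by (simp add: algebra_simps)
  have "u * (1 - x * exp (- z)) \<le> u * phi x z" using assms(1) by (intro mult_left_mono) (auto simp: phi_def)
  moreover have "v * (1 - y * exp (- z)) \<le> v * phi y z" using assms(2) by (intro mult_left_mono) (auto simp: phi_def)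
  moreover have "0 \<le> u * phi x z" "0 \<le> v * phi y z" using assms by (auto simp: phi_def)
  ultimately show ?thesis unfolding phi_def[of "u * x + v * y"] e by linarith
qed

lemma phi_nonneg: "0 \<le> phi x z" and phi_le1: "x \<ge> 0 \<Longrightarrow> phi x z \<le> 1"
  by (auto simp: phi_def)

locale pld =
  fixes \<mu> :: "real measure"
  assumes P: "is_PLD \<mu>"
begin

lemma sets_mu: "sets \<mu> = sets borel" using P by (simp add: is_PLD_def)
lemma space_mu: "space \<mu> = UNIV" using sets_eq_imp_space_eq[OF sets_mu] by simp
lemma subprob: "subprob_space \<mu>" using P by (simp add: is_PLD_def)
lemma fin: "finite_measure \<mu>" using subprob by (simp add: subprob_space_def)
lemma nn_exp: "(\<integral>\<^sup>+ z. ennreal (exp (- z)) \<partial>\<mu>) \<le> 1" using P by (simp add: is_PLD_def)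

lemma meas_phi: "(\<lambda>z. phi x z) \<in> borel_measurable \<mu>"
  unfolding measurable_cong_sets[OF sets_mu refl] phi_def by measurable

lemma meas_exp: "(\<lambda>z. exp (- z)) \<in> borel_measurable \<mu>"
  unfolding measurable_cong_sets[OF sets_mu refl] by measurable

lemma int_phi: "x \<ge> 0 \<Longrightarrow> integrable \<mu> (\<lambda>z. phi x z)"
  by (rule finite_measure.integrable_const_bound[OF fin, where B = 1])
     (auto simp: phi_nonneg phi_le1 meas_phi)

lemma int_exp: "integrable \<mu> (\<lambda>z. exp (- z))"
proof (rule integrableI_nonneg[OF meas_exp])
  show "AE x in \<mu>. 0 \<le> exp (- x)" by simp
  show "(\<integral>\<^sup>+ z. ennreal (exp (- z)) \<partial>\<mu>) < \<infinity>" using nn_exp by (simp add: order_le_less_trans)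
qed

lemma int_exp_le: "(\<integral> z. exp (- z) \<partial>\<mu>) \<le> 1"
proof -
  have "(\<integral> z. exp (- z) \<partial>\<mu>) = enn2real (\<integral>\<^sup>+ z. ennreal (exp (- z)) \<partial>\<mu>)"
    by (rule integral_eq_nn_integral[OF meas_exp]) simp
  also have "\<dots> \<le> enn2real 1" by (rule enn2real_mono[OF nn_exp]) simp
  finally show ?thesis by simp
qed

definition M where "M = measure \<mu> (space \<mu>)"

lemma M01: "0 \<le> M" "M \<le> 1"
  unfolding M_def using subprob_space.subprob_measure_le_1[OF subprob] by auto

lemma H_eq: "hockey_stick_of \<mu> x = (\<integral> z. phi x z \<partial>\<mu>) + (1 - M)"
  by (simp add: hockey_stick_of_def phi_def M_def)

lemma int_phi_bounds: "x \<ge> 0 \<Longrightarrow> 0 \<le> (\<integral> z. phi x z \<partial>\<mu>) \<and> (\<integral> z. phi x z \<partial>\<mu>) \<le> M"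
proof -
  assume x: "x \<ge> 0"
  have "(\<integral> z. phi x z \<partial>\<mu>) \<le> (\<integral> z. 1 \<partial>\<mu>)"
    by (rule integral_mono[OF int_phi[OF x]]) (auto simp: phi_le1[OF x] finite_measure.integrable_const[OF fin])
  also have "\<dots> = M" by (simp add: M_def)
  finally show ?thesis by (simp add: phi_nonneg)
qed

lemma H_bounds:
  assumes "x > 0"
  shows "0 \<le> hockey_stick_of \<mu> x \<and> hockey_stick_of \<mu> x \<le> 1 \<and> 1 - x \<le> hockey_stick_of \<mu> x"
proof -
  have b: "0 \<le> (\<integral> z. phi x z \<partial>\<mu>)" "(\<integral> z. phi x z \<partial>\<mu>) \<le> M" using int_phi_bounds assms by auto
  have "(\<integral> z. 1 - x * exp (- z) \<partial>\<mu>) \<le> (\<integral> z. phi x z \<partial>\<mu>)"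
    by (rule integral_mono) (use int_exp int_phi assms fin in \<open>auto simp: phi_def finite_measure.integrable_const\<close>)
  moreover have "(\<integral> z. 1 - x * exp (- z) \<partial>\<mu>) = (\<integral> z. 1 \<partial>\<mu>) - (\<integral> z. x * exp (- z) \<partial>\<mu>)"
  proof -
    have ic: "integrable \<mu> (\<lambda>z. 1::real)" by (rule finite_measure.integrable_const[OF fin])
    have ie2: "integrable \<mu> (\<lambda>z. x * exp (- z))" by (intro integrable_mult_right int_exp)
    show ?thesis by (rule Bochner_Integration.integral_diff[OF ic ie2])
  qed
  moreover have "(\<integral> z. x * exp (- z) \<partial>\<mu>) = x * (\<integral> z. exp (- z) \<partial>\<mu>)" by simp
  moreover have "(\<integral> z. 1 \<partial>\<mu>) = M" by (simp add: M_def)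
  moreover have "x * (\<integral> z. exp (- z) \<partial>\<mu>) \<le> x" using int_exp_le assms by (simp add: mult_left_le)
  ultimately have "M - x \<le> (\<integral> z. phi x z \<partial>\<mu>)" by linarith
  then show ?thesis using b M01 unfolding H_eq by linarith
qed

lemma H_convex:
  assumes "\<forall>x>0. h x = hockey_stick_of \<mu> x"
  shows "convex_on {0<..} h"
  unfolding convex_on_def
proof (intro conjI ballI allI impI)
  show "convex ({0<..} :: real set)" by simp
  fix x y :: real and u v :: real
  assume x: "x \<in> {0<..}" and y: "y \<in> {0<..}" and u: "u \<ge> 0" and v: "v \<ge> 0" and uv: "u + v = 1"
  have xy0: "u *\<^sub>R x + v *\<^sub>R y > 0"
  proof (cases "u = 0")
    case True then show ?thesis using uv y by simp
  next
    case False then have "u * x > 0" using u x by simp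
    moreover have "v * y \<ge> 0" using v y by simp
    ultimately show ?thesis by simp
  qed
  have i1: "integrable \<mu> (\<lambda>z. phi (u * x + v * y) z)" using int_phi xy0 by simp
  have i2: "integrable \<mu> (\<lambda>z. u * phi x z + v * phi y z)" using int_phi x y by simp
  have "(\<integral> z. phi (u * x + v * y) z \<partial>\<mu>) \<le> (\<integral> z. u * phi x z + v * phi y z \<partial>\<mu>)"
    by (rule integral_mono[OF i1 i2]) (rule phi_convex[OF u v uv])
  also have "\<dots> = u * (\<integral> z. phi x z \<partial>\<mu>) + v * (\<integral> z. phi y z \<partial>\<mu>)"
    using int_phi x y by simp
  finally have I: "(\<integral> z. phi (u * x + v * y) z \<partial>\<mu>) \<le> u * (\<integral> z. phi x z \<partial>\<mu>) + v * (\<integral> z. phi y z \<partial>\<mu>)" .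
  have c: "1 - M = u * (1 - M) + v * (1 - M)" using uv by (metis distrib_right mult_1)
  have e1: "u * ((\<integral> z. phi x z \<partial>\<mu>) + (1 - M)) = u * (\<integral> z. phi x z \<partial>\<mu>) + u * (1 - M)"
    by (rule distrib_left)
  have e2: "v * ((\<integral> z. phi y z \<partial>\<mu>) + (1 - M)) = v * (\<integral> z. phi y z \<partial>\<mu>) + v * (1 - M)"
    by (rule distrib_left)
  have "hockey_stick_of \<mu> (u * x + v * y) \<le> u * hockey_stick_of \<mu> x + v * hockey_stick_of \<mu> y"
    unfolding H_eq e1 e2 using I c by linarith
  then show "h (u *\<^sub>R x + v *\<^sub>R y) \<le> u * h x + v * h y" using assms x y xy0 by simp
qed

end


lemma gpos:
  fixes e x1 x3 w :: real
  assumes "e > 0" "x1 * e < 1" "1 < x3 * e" "2 * w = x1 + x3"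
  shows "(max 0 (1 - x1 * e) + max 0 (1 - x3 * e)) / 2 - max 0 (1 - w * e) > 0"
proof -
  define A where "A = x1 * e"
  define B where "B = x3 * e"
  define C where "C = w * e"
  have we: "2 * C = A + B" unfolding A_def B_def C_def using assms(4) by (metis distrib_right mult.assoc)
  have m1: "max 0 (1 - A) = 1 - A" using assms(2) by (simp add: A_def)
  have m3: "max 0 (1 - B) = 0" using assms(3) by (simp add: B_def)
  have "(max 0 (1 - A) + max 0 (1 - B)) / 2 - max 0 (1 - C) > 0"
  proof (cases "1 - C \<le> 0")
    case True
    then have mw: "max 0 (1 - C) = 0" by simp
    show ?thesis unfolding m1 m3 mw using assms(2) by (simp add: A_def)
  next
    case False
    then have mw: "max 0 (1 - C) = 1 - C" by simp
    have B1: "1 < B" using assms(3) by (simp add: B_def)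
    show ?thesis unfolding m1 m3 mw using we B1 by (simp add: field_simps)
  qed
  then show ?thesis by (simp add: A_def B_def C_def)
qed

lemma hsupp_cong:
  assumes "\<forall>x>0. h x = k x"
  shows "hsupp h = hsupp k"
proof -
  have "\<And>U a b. (\<forall>y\<in>U \<inter> {0<..}. h y = a * y + b) = (\<forall>y\<in>U \<inter> {0<..}. k y = a * y + b)"
    using assms by auto
  then show ?thesis unfolding hsupp_def by simp
qed

context pld
begin

lemma kink:
  assumes z: "z \<in> measure_support \<mu>"
  shows "exp z \<in> hsupp (hockey_stick_of \<mu>)"
  unfolding hsupp_def
proof (intro CollectI conjI allI impI notI)
  define w where "w = exp z"
  show "exp z > 0" by simp
  fix U assume U: "open U \<and> exp z \<in> U"
  assume "\<exists>a b. \<forall>y\<in>U \<inter> {0<..}. hockey_stick_of \<mu> y = a * y + b"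
  then obtain a b where ab: "\<forall>y\<in>U \<inter> {0<..}. hockey_stick_of \<mu> y = a * y + b" by blast
  obtain \<delta> where \<delta>: "\<delta> > 0" "ball w \<delta> \<subseteq> U" using U unfolding w_def by (meson openE)
  have w0: "w > 0" by (simp add: w_def)
  obtain d where d: "d > 0" "d < \<delta>" "d < w" using small2[OF \<delta>(1) w0] by blast
  define x1 where "x1 = w - d"
  define x3 where "x3 = w + d"
  have x10: "x1 > 0" "x3 > 0" "x1 < w" "w < x3" using d w0 by (auto simp: x1_def x3_def)
  have inU: "x1 \<in> U \<inter> {0<..}" "x3 \<in> U \<inter> {0<..}" "w \<in> U \<inter> {0<..}"
    using \<delta> d x10 by (auto simp: x1_def x3_def dist_real_def subset_iff)
  have Hw: "hockey_stick_of \<mu> w = (hockey_stick_of \<mu> x1 + hockey_stick_of \<mu> x3) / 2"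
  proof -
    have e: "hockey_stick_of \<mu> w = a * w + b" "hockey_stick_of \<mu> x1 = a * x1 + b" "hockey_stick_of \<mu> x3 = a * x3 + b"
      using ab inU by blast+
    show ?thesis unfolding e by (simp add: x1_def x3_def algebra_simps)
  qed
  define G where "G \<zeta> = (phi x1 \<zeta> + phi x3 \<zeta>) / 2 - phi w \<zeta>" for \<zeta>
  have iG: "integrable \<mu> G" unfolding G_def using int_phi x10 w0 by simp
  have intG: "(\<integral> \<zeta>. G \<zeta> \<partial>\<mu>) = 0"
  proof -
    have "(\<integral> \<zeta>. G \<zeta> \<partial>\<mu>) = ((\<integral> \<zeta>. phi x1 \<zeta> \<partial>\<mu>) + (\<integral> \<zeta>. phi x3 \<zeta> \<partial>\<mu>)) / 2 - (\<integral> \<zeta>. phi w \<zeta> \<partial>\<mu>)"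
      unfolding G_def using int_phi x10 w0 by simp
    also have "\<dots> = 0" using Hw unfolding H_eq by simp
    finally show ?thesis .
  qed
  have Gnn: "0 \<le> G \<zeta>" for \<zeta>
  proof -
    have "phi ((1/2) * x1 + (1/2) * x3) \<zeta> \<le> (1/2) * phi x1 \<zeta> + (1/2) * phi x3 \<zeta>"
      by (rule phi_convex) auto
    moreover have "(1/2) * x1 + (1/2) * x3 = w" by (simp add: x1_def x3_def field_simps)
    ultimately show ?thesis unfolding G_def by simp
  qed
  have Gnn': "AE \<zeta> in \<mu>. 0 \<le> G \<zeta>" using Gnn by simp
  have AE0: "AE \<zeta> in \<mu>. G \<zeta> = 0"
    using integral_nonneg_eq_0_iff_AE[OF iG Gnn'] intG by blast
  have lw: "ln w = z" by (simp add: w_def)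
  have "ln x1 < ln w" using x10 w0 by simp
  then have l1: "ln x1 < z" using lw by simp
  have "ln w < ln x3" using x10 w0 by simp
  then have l3: "z < ln x3" using lw by simp
  define \<epsilon> where "\<epsilon> = min (z - ln x1) (ln x3 - z)"
  have \<epsilon>0: "\<epsilon> > 0" using l1 l3 by (simp add: \<epsilon>_def)
  have Gpos: "G \<zeta> > 0" if \<zeta>: "\<zeta> \<in> ball z \<epsilon>" for \<zeta>
  proof -
    have dz: "\<bar>z - \<zeta>\<bar> < \<epsilon>" using \<zeta> by (simp add: dist_real_def)
    have "\<epsilon> \<le> z - ln x1" "\<epsilon> \<le> ln x3 - z" by (simp_all add: \<epsilon>_def)
    then have "ln x1 < \<zeta>" "\<zeta> < ln x3" using dz by (simp_all add: abs_less_iff)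
    then have "exp (ln x1) < exp \<zeta>" "exp \<zeta> < exp (ln x3)" by simp_all
    then have k: "x1 < exp \<zeta>" "exp \<zeta> < x3" using x10 by simp_all
    have e0: "exp (- \<zeta>) > 0" by simp
    have ez: "exp \<zeta> > 0" by simp
    have em: "exp (- \<zeta>) = 1 / exp \<zeta>" by (simp add: exp_minus inverse_eq_divide)
    have "x1 / exp \<zeta> < 1" using k(1) ez by simp
    then have "x1 * exp (- \<zeta>) < 1" unfolding em by simp
    moreover have "1 < x3 * exp (- \<zeta>)"
    proof -
      have "1 < x3 / exp \<zeta>" using k(2) ez by simp
      then show ?thesis unfolding em by simp
    qed
    moreover have "2 * w = x1 + x3" by (simp add: x1_def x3_def)
    ultimately have "(max 0 (1 - x1 * exp (- \<zeta>)) + max 0 (1 - x3 * exp (- \<zeta>))) / 2 - max 0 (1 - w * exp (- \<zeta>)) > 0"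
      by (rule gpos[OF e0])
    then show ?thesis unfolding G_def phi_def .
  qed
  have pos: "emeasure \<mu> (ball z \<epsilon>) > 0" using z \<epsilon>0 by (simp add: measure_support_def)
  from AE0 obtain N where N: "{\<zeta> \<in> space \<mu>. \<not> G \<zeta> = 0} \<subseteq> N" "emeasure \<mu> N = 0" "N \<in> sets \<mu>"
    by (rule AE_E)
  have "ball z \<epsilon> \<subseteq> N"
  proof
    fix \<zeta> assume "\<zeta> \<in> ball z \<epsilon>"
    then have "G \<zeta> \<noteq> 0" using Gpos by force
    then have "\<zeta> \<in> {\<zeta> \<in> space \<mu>. \<not> G \<zeta> = 0}" using space_mu by simp
    then show "\<zeta> \<in> N" using N(1) by blast
  qed
  then have "emeasure \<mu> (ball z \<epsilon>) \<le> emeasure \<mu> N" by (rule emeasure_mono[OF _ N(3)])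
  then show False using pos N(2) by simp
qed

end

theorem final_thm:
  fixes h1 h2 :: "real \<Rightarrow> real"
  assumes "nondeg_hockey_stick h1" and "nondeg_hockey_stick h2"
    and "\<not> (\<forall>x>0. h1 x \<le> h2 x)" and "\<not> (\<forall>x>0. h2 x \<le> h1 x)"
  shows "links (hsupp h1) (Xset h1 h2) (Xset h2 h1) \<or> links (hsupp h2) (Xset h1 h2) (Xset h2 h1)"
proof -
  have props: "convex_on {0<..} h \<and> (\<forall>x. 0 < x \<longrightarrow> 0 \<le> h x \<and> h x \<le> 1 \<and> 1 - x \<le> h x)
      \<and> (\<exists>a b. a \<in> hsupp h \<and> b \<in> hsupp h \<and> a < b)" if nd: "nondeg_hockey_stick h" for h
  proof -
    obtain \<mu> where mu: "is_PLD \<mu>" "\<forall>x>0. h x = hockey_stick_of \<mu> x"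
      and ab: "\<exists>a b. a \<noteq> b \<and> a \<in> measure_support \<mu> \<and> b \<in> measure_support \<mu>"
      using nd unfolding nondeg_hockey_stick_def by blast
    interpret pld \<mu> by unfold_locales (fact mu(1))
    have c: "convex_on {0<..} h" by (rule H_convex[OF mu(2)])
    have bd: "\<forall>x. 0 < x \<longrightarrow> 0 \<le> h x \<and> h x \<le> 1 \<and> 1 - x \<le> h x" using H_bounds mu(2) by simp
    obtain a b where a: "a \<noteq> b" "a \<in> measure_support \<mu>" "b \<in> measure_support \<mu>" using ab by blast
    have hs: "hsupp h = hsupp (hockey_stick_of \<mu>)" by (rule hsupp_cong[OF mu(2)])
    have ea: "exp a \<in> hsupp h" "exp b \<in> hsupp h" using kink a hs by auto
    have "exp a \<noteq> exp b" using a(1) by simp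
    then have "exp a < exp b \<or> exp b < exp a" by linarith
    then have "\<exists>a b. a \<in> hsupp h \<and> b \<in> hsupp h \<and> a < b" using ea by blast
    then show ?thesis using c bd by blast
  qed
  note p1 = props[OF assms(1)] and p2 = props[OF assms(2)]
  have c1: "convex_on {0<..} h1" and c2: "convex_on {0<..} h2"
    and b1: "\<And>x. 0 < x \<Longrightarrow> 0 \<le> h1 x \<and> h1 x \<le> 1 \<and> 1 - x \<le> h1 x"
    and b2: "\<And>x. 0 < x \<Longrightarrow> 0 \<le> h2 x \<and> h2 x \<le> 1 \<and> 1 - x \<le> h2 x"
    and t1: "\<exists>a b. a \<in> hsupp h1 \<and> b \<in> hsupp h1 \<and> a < b"
    and t2: "\<exists>a b. a \<in> hsupp h2 \<and> b \<in> hsupp h2 \<and> a < b"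
    using p1 p2 by blast+
  interpret hs2 h1 h2 by (rule hs2.intro[OF c1 c2 b1 b2 t1 t2])
  have ex1: "\<exists>x>0. D x < 0" using assms(4) by (auto simp: D_def not_le)
  have ex2: "\<exists>y>0. D y > 0" using assms(3) by (auto simp: D_def not_le)
  show ?thesis by (rule abstract_main[OF ex1 ex2])
qed


theorem theorem6p1:
  fixes h1 h2 :: "real \<Rightarrow> real"
  assumes "nondeg_hockey_stick h1" and "nondeg_hockey_stick h2"
    and "\<not> (\<forall>x>0. h1 x \<le> h2 x)" and "\<not> (\<forall>x>0. h2 x \<le> h1 x)"
  shows "links (hsupp h1) (Xset h1 h2) (Xset h2 h1) \<or> links (hsupp h2) (Xset h1 h2) (Xset h2 h1)"
  by (rule final_thm[OF assms])

end
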